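(* Let $H:\mathbb R_+\to(0,1)$ be continuous and satisfy: (H1) there are constants $0<h_1<h_2<1$ with $h_1\le H_t\le h_2$ for all $t\ge0$; (H2) there are constants $D>0$, $\kappa\in(0,1]$ with $|H_t-H_s|\le D|t-s|^\kappa$ for all $t\ge s>0$. Let $Y$ be the multifractional Brownian motion with Hurst function $H$. Then for any $\delta>0$ there exists a nonnegative random variable $\xi=\xi(\delta)$ such that almost surely, for all $t>0$, \[ |Y(t)|\le (t^{h_2+\delta}\vee1)\,\xi, \] and there exist positive constants $C_1=C_1(\delta)$, $C_2=C_2(\delta)$ such that $\mathbb P(\xi>u)\le C_1e^{-C_2u^2}$ for all $u>0$.
   Context: The (harmonizable) multifractional Brownian motion with continuous functional parameter $H$ is $Y(t)=\int_{\mathbb R}\frac{e^{itu}-1}{|u|^{H_t+1/2}}\widetilde W(du)$, $t\ge0$, where $\widetilde W$ is the Fourier transform of real Gaussian white noise $W$, i.e. the unique complex-valued random measure with $\int_{\mathbb R}f(u)W(du)=\int_{\mathbb R}\widehat f(u)\widetilde W(du)$ a.s. for all $f\in L^2(\mathbb R)$. *)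

theory Defs
  imports "HOL-Probability.Probability"
begin

text \<open>Covariance of the harmonizable multifractional Brownian motion
  Y(t) = int (e^{itu}-1)/|u|^{H_t+1/2} dW~(u), normalised with the unitary Fourier
  transform, so that E[Y(t)Y(s)] = int (e^{itu}-1)(e^{-isu}-1)/|u|^{H_t+H_s+1} du,
  whose (real) value is the integral below.\<close>
definition mbm_cov :: "(real \<Rightarrow> real) \<Rightarrow> real \<Rightarrow> real \<Rightarrow> real" where
  "mbm_cov H t s =
     (LBINT u. (1 - cos (t * u) - cos (s * u) + cos ((t - s) * u)) / \<bar>u\<bar> powr (H t + H s + 1))"

text \<open>Y is (a version of) the multifractional Brownian motion with functional parameter H
  on the probability space M: a real centred Gaussian process on [0,oo) with covariance
  mbm_cov H (Gaussianity expressed via characteristic functions of all finite linear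
  combinations), whose sample paths are almost surely continuous.\<close>
definition is_mbm :: "'a measure \<Rightarrow> (real \<Rightarrow> real) \<Rightarrow> (real \<Rightarrow> 'a \<Rightarrow> real) \<Rightarrow> bool" where
  "is_mbm M H Y \<longleftrightarrow>
     prob_space M \<and>
     (\<forall>t\<ge>0. Y t \<in> borel_measurable M) \<and>
     (\<forall>S a. finite S \<longrightarrow> S \<subseteq> {0..} \<longrightarrow> (\<forall>\<theta>.
        char (distr M borel (\<lambda>\<omega>. \<Sum>t\<in>S. a t * Y t \<omega>)) \<theta> =
        complex_of_real (exp (- (\<theta>\<^sup>2 / 2) * (\<Sum>t\<in>S. \<Sum>s\<in>S. a t * a s * mbm_cov H t s))))) \<and>
     (AE \<omega> in M. continuous_on {0..} (\<lambda>t. Y t \<omega>))"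

end

theory Submission
  imports Defs
begin

lemma std_normal_tail:
  assumes a: "0 \<le> a"
  shows "measure std_normal_distribution {z. a < \<bar>z\<bar>} \<le> sqrt 2 * exp (- a\<^sup>2 / 4)"
proof -
  have pw: "std_normal_density z * indicator {z. a < \<bar>z\<bar>} z
      \<le> exp (- a\<^sup>2 / 4) * sqrt 2 * normal_density 0 (sqrt 2) z" for z
  proof (cases "a < \<bar>z\<bar>")
    case True
    have "a\<^sup>2 \<le> z\<^sup>2" using True a
      by (metis abs_ge_zero abs_of_nonneg less_imp_le power2_abs power_mono)
    then have "exp (- z\<^sup>2 / 2) \<le> exp (- a\<^sup>2 / 4) * exp (- z\<^sup>2 / 4)"
      by (simp add: exp_add[symmetric])
    moreover have "sqrt 2 * (1 / sqrt (2 * pi * (sqrt 2)\<^sup>2)) = 1 / sqrt (2 * pi)"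
      by (simp add: real_sqrt_mult field_simps)
    ultimately show ?thesis using True
      unfolding std_normal_density_def normal_density_def
      by (auto simp: field_simps)
  next
    case False
    then show ?thesis by (simp add: normal_density_nonneg)
  qed
  have "emeasure std_normal_distribution {z. a < \<bar>z\<bar>}
      = (\<integral>\<^sup>+ z. ennreal (std_normal_density z * indicator {z. a < \<bar>z\<bar>} z) \<partial>lborel)"
    by (subst emeasure_density) (auto intro!: nn_integral_cong simp: indicator_def)
  also have "\<dots> \<le> (\<integral>\<^sup>+ z. ennreal (exp (- a\<^sup>2 / 4) * sqrt 2) * ennreal (normal_density 0 (sqrt 2) z) \<partial>lborel)"
    by (intro nn_integral_mono) (use pw in \<open>simp add: ennreal_mult'[symmetric]\<close>)
  also have "\<dots> = ennreal (exp (- a\<^sup>2 / 4) * sqrt 2) * (\<integral>\<^sup>+ z. ennreal (normal_density 0 (sqrt 2) z) \<partial>lborel)"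
    by (rule nn_integral_cmult) simp
  also have "(\<integral>\<^sup>+ z. ennreal (normal_density 0 (sqrt 2) z) \<partial>lborel) = 1"
    by (subst nn_integral_eq_integral) auto
  finally have "emeasure std_normal_distribution {z. a < \<bar>z\<bar>} \<le> ennreal (sqrt 2 * exp (- a\<^sup>2 / 4))"
    by (simp add: mult.commute)
  then show ?thesis
    by (simp add: measure_def enn2real_leI)
qed

lemma gauss_tail:
  assumes P: "prob_space M" and X: "X \<in> borel_measurable M"
    and ch: "\<And>\<theta>. char (distr M borel X) \<theta> = complex_of_real (exp (- (\<theta>\<^sup>2 / 2) * V))"
    and B: "0 < B" "V \<le> B" and x: "0 \<le> x"
  shows "measure M {\<omega>\<in>space M. x < \<bar>X \<omega>\<bar>} \<le> sqrt 2 * exp (- x\<^sup>2 / (4 * B))"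
proof -
  interpret prob_space M by (rule P)
  have rdX: "real_distribution (distr M borel X)"
    using X by (simp add: real_distribution_def real_distribution_axioms_def prob_space_distr)
  have "norm (char (distr M borel X) 1) \<le> 1"
    using real_distribution.cmod_char_le_1[OF rdX] .
  then have "exp (- V / 2) \<le> 1" using ch[of 1] by simp
  then have V0: "0 \<le> V" by simp
  define \<sigma> where "\<sigma> = sqrt V"
  have s0: "0 \<le> \<sigma>" and s2: "\<sigma>\<^sup>2 = V" using V0 by (auto simp: \<sigma>_def)
  interpret N: prob_space std_normal_distribution using prob_space_normal_density by simp
  define N' where "N' = distr std_normal_distribution borel (\<lambda>z. \<sigma> * z)"
  have rdN: "real_distribution N'"
    unfolding N'_def by (simp add: real_distribution_def real_distribution_axioms_def N.prob_space_distr)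
  have "char N' \<theta> = char std_normal_distribution (\<theta> * \<sigma>)" for \<theta>
    unfolding N'_def char_def
    by (subst integral_distr) (auto simp: mult_ac)
  also have "\<dots> \<theta> = complex_of_real (exp (- (\<theta>\<^sup>2 / 2) * V))" for \<theta>
    by (simp add: char_std_normal_distribution power_mult_distrib s2[symmetric] field_simps)
  finally have "char N' = char (distr M borel X)" using ch by auto
  then have eq: "distr M borel X = N'"
    using Levy_uniqueness[OF rdX rdN] by simp
  have "measure M {\<omega>\<in>space M. x < \<bar>X \<omega>\<bar>} = measure (distr M borel X) {y. x < \<bar>y\<bar>}"
    using X by (subst measure_distr) (auto intro!: arg_cong[where f="measure M"])
  also have "\<dots> = measure std_normal_distribution {z. x < \<bar>\<sigma> * z\<bar>}"
    unfolding eq N'_def by (subst measure_distr) (auto intro!: arg_cong[where f="measure _"])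
  also have "\<dots> \<le> sqrt 2 * exp (- x\<^sup>2 / (4 * B))"
  proof (cases "\<sigma> = 0")
    case True
    then show ?thesis using x by simp
  next
    case False
    then have sp: "0 < \<sigma>" using s0 by simp
    have "{z. x < \<bar>\<sigma> * z\<bar>} = {z. x / \<sigma> < \<bar>z\<bar>}"
      using sp by (auto simp: abs_mult field_simps)
    then have "measure std_normal_distribution {z. x < \<bar>\<sigma> * z\<bar>} \<le> sqrt 2 * exp (- (x / \<sigma>)\<^sup>2 / 4)"
      using std_normal_tail[of "x / \<sigma>"] sp x by simp
    also have "\<dots> \<le> sqrt 2 * exp (- x\<^sup>2 / (4 * B))"
    proof -
      have "(x / \<sigma>)\<^sup>2 = x\<^sup>2 / V" using s2 by (simp add: power_divide)
      moreover have "x\<^sup>2 / B \<le> x\<^sup>2 / V"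
        using B sp s2 by (intro divide_left_mono) auto
      ultimately show ?thesis by simp
    qed
    finally show ?thesis .
  qed
  finally show ?thesis .
qed

lemma one_minus_cos_le: "1 - cos y \<le> (y::real)\<^sup>2 / 2"
proof -
  have "cos y = cos (2 * (y/2))" by simp
  also have "\<dots> = 1 - 2 * (sin (y/2))\<^sup>2" by (rule cos_double_sin)
  finally have e: "1 - cos y = 2 * (sin (y/2))\<^sup>2" by simp
  have "\<bar>sin (y/2)\<bar> \<le> \<bar>y/2\<bar>" by (rule abs_sin_x_le_abs_x)
  then have "(sin (y/2))\<^sup>2 \<le> (y/2)\<^sup>2"
    by (metis abs_ge_zero power2_abs power_mono)
  then show ?thesis using e by (simp add: power_divide)
qed

lemma two_minus_cos_le: "2 - 2 * cos y \<le> min 4 ((y::real)\<^sup>2)"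
  using one_minus_cos_le[of y] cos_ge_minus_one[of y] by linarith

lemma min4_powr:
  fixes y \<theta> :: real
  assumes "0 \<le> y" "0 \<le> \<theta>" "\<theta> \<le> 1"
  shows "min 4 (y\<^sup>2) \<le> 4 * y powr (2 * \<theta>)"
proof (cases "y \<le> 1")
  case True
  show ?thesis
  proof (cases "y = 0")
    case True then show ?thesis by simp
  next
    case False
    have "y\<^sup>2 = y powr 2" using assms False by (simp add: powr_realpow)
    also have "\<dots> \<le> y powr (2 * \<theta>)" using assms True by (intro powr_mono') auto
    finally show ?thesis using powr_ge_zero[of y "2*\<theta>"] by linarith
  qed
next
  case False
  then have "1 \<le> y powr (2 * \<theta>)" using assms by (intro ge_one_powr_ge_zero) auto
  then show ?thesis by linarith
qed

lemma exp_diff_le: "\<bar>exp (A::real) - exp B\<bar> \<le> \<bar>A - B\<bar> * max (exp A) (exp B)"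
proof -
  have 1: "exp A - exp B \<le> (A - B) * exp A"
  proof -
    have "1 + (B - A) \<le> exp (B - A)" by (rule exp_ge_add_one_self)
    then have "exp A * (1 + (B - A)) \<le> exp A * exp (B - A)" by simp
    also have "\<dots> = exp B" by (simp add: exp_diff)
    finally show ?thesis by (simp add: algebra_simps)
  qed
  have 2: "exp B - exp A \<le> (B - A) * exp B"
  proof -
    have "1 + (A - B) \<le> exp (A - B)" by (rule exp_ge_add_one_self)
    then have "exp B * (1 + (A - B)) \<le> exp B * exp (A - B)" by simp
    also have "\<dots> = exp A" by (simp add: exp_diff)
    finally show ?thesis by (simp add: algebra_simps)
  qed
  show ?thesis
  proof (cases "A \<le> B")
    case True
    then have "exp A \<le> exp B" by simp
    then show ?thesis using 1 2 True by (simp add: abs_if max_def)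
  next
    case False
    then have "exp B \<le> exp A" by simp
    then show ?thesis using 1 2 False by (simp add: abs_if max_def)
  qed
qed

lemma ln_le_powr_small: 
  fixes x \<eta> :: real
  assumes "0 < x" "x \<le> 1" "0 < \<eta>"
  shows "\<bar>ln x\<bar> \<le> x powr (-\<eta>) / \<eta>"
proof -
  have "ln (x powr (-\<eta>)) \<le> x powr (-\<eta>) - 1" using assms by (intro ln_le_minus_one) auto
  then have "- \<eta> * ln x \<le> x powr (-\<eta>)" by simp
  moreover have "ln x \<le> 0" using assms by simp
  ultimately show ?thesis using assms by (simp add: field_simps)
qed

lemma ln_le_powr_large: 
  fixes x \<eta> :: real
  assumes "1 \<le> x" "0 < \<eta>"
  shows "\<bar>ln x\<bar> \<le> x powr \<eta> / \<eta>"
proof -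
  have "ln (x powr \<eta>) \<le> x powr \<eta> - 1" using assms by (intro ln_le_minus_one) auto
  then have "\<eta> * ln x \<le> x powr \<eta>" by simp
  moreover have "0 \<le> ln x" using assms by simp
  ultimately show ?thesis using assms by (simp add: field_simps)
qed

lemma nn_sym:
  fixes g :: "real \<Rightarrow> real"
  assumes g: "g \<in> borel_measurable borel" "\<And>x. 0 \<le> g x"
  shows "(\<integral>\<^sup>+u. ennreal (g \<bar>u\<bar>) \<partial>lborel) \<le> 2 * (\<integral>\<^sup>+x. ennreal (g x) * indicator {0..} x \<partial>lborel)"
proof -
  have "(\<integral>\<^sup>+u. ennreal (g \<bar>u\<bar>) \<partial>lborel)
     \<le> (\<integral>\<^sup>+u. ennreal (g u) * indicator {0..} u + ennreal (g (-u)) * indicator {0..} (-u) \<partial>lborel)"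
    by (intro nn_integral_mono) (auto simp: indicator_def)
  also have "\<dots> = (\<integral>\<^sup>+u. ennreal (g u) * indicator {0..} u \<partial>lborel) + (\<integral>\<^sup>+u. ennreal (g (-u)) * indicator {0..} (-u) \<partial>lborel)"
    using g by (intro nn_integral_add) auto
  also have "(\<integral>\<^sup>+u. ennreal (g (-u)) * indicator {0..} (-u) \<partial>lborel) = (\<integral>\<^sup>+u. ennreal (g u) * indicator {0..} u \<partial>lborel)"
  proof -
    have "(\<integral>\<^sup>+u. ennreal (g u) * indicator {0..} u \<partial>lborel) = (\<integral>\<^sup>+u. ennreal (g u) * indicator {0..} u \<partial>(distr lborel borel uminus))"
      by (simp add: lborel_distr_uminus)
    also have "\<dots> = (\<integral>\<^sup>+u. ennreal (g (-u)) * indicator {0..} (-u) \<partial>lborel)"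
      using g by (subst nn_integral_distr) auto
    finally show ?thesis by simp
  qed
  finally show ?thesis by (simp add: mult_2)
qed

lemma nn_powr_01:
  fixes p :: real assumes "p > -1"
  shows "(\<integral>\<^sup>+x. ennreal (x powr p) * indicator {0..1} x \<partial>lborel) = ennreal (1 / (p + 1))"
  using nn_integral_has_integral_lebesgue'[OF _ has_integral_powr_from_0[OF assms, of 1]] by simp

lemma nn_powr_inf:
  fixes p :: real assumes "p < -1"
  shows "(\<integral>\<^sup>+x. ennreal (x powr p) * indicator {1..} x \<partial>lborel) = ennreal (- 1 / (p + 1))"
  using nn_integral_has_integral_lebesgue'[OF _ has_integral_powr_to_inf[OF assms, of 1]] by simp

definition wgt :: "real \<Rightarrow> real \<Rightarrow> real \<Rightarrow> real" where
  "wgt e0 e1 x = (if x \<le> 1 then x powr e0 else x powr e1)"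

lemma wgt_nonneg[simp]: "0 \<le> wgt e0 e1 x" by (simp add: wgt_def)

lemma wgt_measurable[measurable]: "wgt e0 e1 \<in> borel_measurable borel"
  unfolding wgt_def[abs_def] by measurable

lemma key_nn:
  fixes d \<theta>0 \<theta>1 e0 e1 :: real
  assumes d: "0 \<le> d" and t0: "0 \<le> \<theta>0" "\<theta>0 \<le> 1" and t1: "0 \<le> \<theta>1" "\<theta>1 \<le> 1"
    and e0: "2 * \<theta>0 + e0 > -1" and e1: "2 * \<theta>1 + e1 < -1"
  shows "(\<integral>\<^sup>+u. ennreal (min 4 ((d * u)\<^sup>2) * wgt e0 e1 \<bar>u\<bar>) \<partial>lborel)
     \<le> ennreal (8 * d powr (2 * \<theta>0) / (2 * \<theta>0 + e0 + 1) - 8 * d powr (2 * \<theta>1) / (2 * \<theta>1 + e1 + 1))"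
proof -
  define g where "g x = min 4 ((d * x)\<^sup>2) * wgt e0 e1 x" for x
  have gm: "g \<in> borel_measurable borel" unfolding g_def[abs_def] by measurable
  have g0: "0 \<le> g x" for x unfolding g_def by simp
  have eq: "min 4 ((d * u)\<^sup>2) * wgt e0 e1 \<bar>u\<bar> = g \<bar>u\<bar>" for u
    unfolding g_def by (simp add: power_mult_distrib)
  have pw: "ennreal (g x) * indicator {0..} x \<le>
     ennreal (4 * d powr (2 * \<theta>0)) * (ennreal (x powr (2 * \<theta>0 + e0)) * indicator {0..1} x)
     + ennreal (4 * d powr (2 * \<theta>1)) * (ennreal (x powr (2 * \<theta>1 + e1)) * indicator {1..} x)" for x
  proof (cases "0 \<le> x")
    case True
    have m: "min 4 ((d * x)\<^sup>2) \<le> 4 * (d powr (2 * \<theta>) * x powr (2 * \<theta>))" if "0 \<le> \<theta>" "\<theta> \<le> 1" for \<theta>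
      using min4_powr[of "d * x" \<theta>] d True that by (simp add: powr_mult)
    show ?thesis
    proof (cases "x \<le> 1")
      case True2: True
      have "g x \<le> 4 * (d powr (2 * \<theta>0) * x powr (2 * \<theta>0)) * x powr e0"
        unfolding g_def wgt_def using True2 m[OF t0] by (simp add: mult_right_mono)
      also have "\<dots> = 4 * d powr (2 * \<theta>0) * x powr (2 * \<theta>0 + e0)" by (simp add: powr_add)
      finally have "ennreal (g x) \<le> ennreal (4 * d powr (2 * \<theta>0)) * ennreal (x powr (2 * \<theta>0 + e0))"
        by (simp add: ennreal_mult'[symmetric])
      then show ?thesis using True True2 by (simp add: indicator_def add_increasing2)
    next
      case False
      have "g x \<le> 4 * (d powr (2 * \<theta>1) * x powr (2 * \<theta>1)) * x powr e1"
        unfolding g_def wgt_def using False m[OF t1] by (simp add: mult_right_mono)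
      also have "\<dots> = 4 * d powr (2 * \<theta>1) * x powr (2 * \<theta>1 + e1)" by (simp add: powr_add)
      finally have "ennreal (g x) \<le> ennreal (4 * d powr (2 * \<theta>1)) * ennreal (x powr (2 * \<theta>1 + e1))"
        by (simp add: ennreal_mult'[symmetric])
      then show ?thesis using True False by (simp add: indicator_def)
    qed
  qed (simp add: indicator_def)
  have "(\<integral>\<^sup>+u. ennreal (min 4 ((d * u)\<^sup>2) * wgt e0 e1 \<bar>u\<bar>) \<partial>lborel) = (\<integral>\<^sup>+u. ennreal (g \<bar>u\<bar>) \<partial>lborel)"
    by (simp add: eq)
  also have "\<dots> \<le> 2 * (\<integral>\<^sup>+x. ennreal (g x) * indicator {0..} x \<partial>lborel)"
    by (rule nn_sym[OF gm g0])
  also have "(\<integral>\<^sup>+x. ennreal (g x) * indicator {0..} x \<partial>lborel) \<le>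
     (\<integral>\<^sup>+x. ennreal (4 * d powr (2 * \<theta>0)) * (ennreal (x powr (2 * \<theta>0 + e0)) * indicator {0..1} x)
     + ennreal (4 * d powr (2 * \<theta>1)) * (ennreal (x powr (2 * \<theta>1 + e1)) * indicator {1..} x) \<partial>lborel)"
    by (intro nn_integral_mono pw)
  also have "\<dots> = ennreal (4 * d powr (2 * \<theta>0)) * (\<integral>\<^sup>+x. ennreal (x powr (2 * \<theta>0 + e0)) * indicator {0..1} x \<partial>lborel)
     + ennreal (4 * d powr (2 * \<theta>1)) * (\<integral>\<^sup>+x. ennreal (x powr (2 * \<theta>1 + e1)) * indicator {1..} x \<partial>lborel)"
    by (subst nn_integral_add) (auto simp: nn_integral_cmult)
  also have "\<dots> = ennreal (4 * d powr (2 * \<theta>0)) * ennreal (1 / (2 * \<theta>0 + e0 + 1))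
     + ennreal (4 * d powr (2 * \<theta>1)) * ennreal (- 1 / (2 * \<theta>1 + e1 + 1))"
    using e0 e1 by (simp add: nn_powr_01 nn_powr_inf)
  also have "\<dots> = ennreal (4 * d powr (2 * \<theta>0) * (1 / (2 * \<theta>0 + e0 + 1))) + ennreal (4 * d powr (2 * \<theta>1) * (- 1 / (2 * \<theta>1 + e1 + 1)))"
  proof -
    have A: "0 \<le> 1 / (2 * \<theta>0 + e0 + 1)" "0 \<le> - 1 / (2 * \<theta>1 + e1 + 1)" using e0 e1 by auto
    show ?thesis
      using ennreal_mult[OF _ A(1), of "4 * d powr (2 * \<theta>0)"] ennreal_mult[OF _ A(2), of "4 * d powr (2 * \<theta>1)"]
      by simp
  qed
  also have "\<dots> = ennreal (4 * d powr (2 * \<theta>0) * (1 / (2 * \<theta>0 + e0 + 1)) + 4 * d powr (2 * \<theta>1) * (- 1 / (2 * \<theta>1 + e1 + 1)))"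
    using e0 e1 by (subst ennreal_plus[symmetric]) (auto intro!: mult_nonneg_nonneg divide_nonneg_neg)
  also have "\<dots> = ennreal (4 * d powr (2 * \<theta>0) / (2 * \<theta>0 + e0 + 1) - 4 * d powr (2 * \<theta>1) / (2 * \<theta>1 + e1 + 1))"
    by simp
  also have "2 * ennreal (4 * d powr (2 * \<theta>0) / (2 * \<theta>0 + e0 + 1) - 4 * d powr (2 * \<theta>1) / (2 * \<theta>1 + e1 + 1))
     = ennreal (2 * (4 * d powr (2 * \<theta>0) / (2 * \<theta>0 + e0 + 1) - 4 * d powr (2 * \<theta>1) / (2 * \<theta>1 + e1 + 1)))"
    by (subst ennreal_mult') auto
  also have "2 * (4 * d powr (2 * \<theta>0) / (2 * \<theta>0 + e0 + 1) - 4 * d powr (2 * \<theta>1) / (2 * \<theta>1 + e1 + 1))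
     = 8 * d powr (2 * \<theta>0) / (2 * \<theta>0 + e0 + 1) - 8 * d powr (2 * \<theta>1) / (2 * \<theta>1 + e1 + 1)"
    by (simp add: algebra_simps)
  finally show ?thesis by (simp add: mult_left_mono)
qed

definition Fint :: "(real \<Rightarrow> real) \<Rightarrow> real \<Rightarrow> real \<Rightarrow> real \<Rightarrow> real" where
  "Fint H t s u = (1 - cos (t * u) - cos (s * u) + cos ((t - s) * u)) / \<bar>u\<bar> powr (H t + H s + 1)"

lemma mbm_cov_Fint: "mbm_cov H t s = (LBINT u. Fint H t s u)"
  unfolding mbm_cov_def Fint_def ..

lemma Fint_measurable[measurable]: "Fint H t s \<in> borel_measurable borel"
  unfolding Fint_def[abs_def] by measurable

lemma alg_ineq:
  fixes p r c1 s1 c2 s2 :: real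
  assumes "c1\<^sup>2 + s1\<^sup>2 = 1" "c2\<^sup>2 + s2\<^sup>2 = 1"
  shows "p\<^sup>2 * (2 - 2 * c1) + r\<^sup>2 * (2 - 2 * c2) - 2 * ((p * r) * (1 - c1 - c2 + (c1 * c2 + s1 * s2)))
     \<le> 2 * p\<^sup>2 * (2 - 2 * (c1 * c2 + s1 * s2)) + 2 * (p - r)\<^sup>2 * (2 - 2 * c2)"
proof -
  define X1 where "X1 = p * (c1 - c2)"
  define Y1 where "Y1 = (p - r) * (c2 - 1)"
  define X2 where "X2 = p * (s1 - s2)"
  define Y2 where "Y2 = (p - r) * s2"
  have L: "p\<^sup>2 * (2 - 2 * c1) + r\<^sup>2 * (2 - 2 * c2) - 2 * ((p * r) * (1 - c1 - c2 + (c1 * c2 + s1 * s2)))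
      = (X1 + Y1)\<^sup>2 + (X2 + Y2)\<^sup>2"
    unfolding X1_def Y1_def X2_def Y2_def using assms
    by algebra
  have R: "2 * p\<^sup>2 * (2 - 2 * (c1 * c2 + s1 * s2)) + 2 * (p - r)\<^sup>2 * (2 - 2 * c2)
      = 2 * X1\<^sup>2 + 2 * Y1\<^sup>2 + 2 * X2\<^sup>2 + 2 * Y2\<^sup>2"
    unfolding X1_def Y1_def X2_def Y2_def using assms
    by algebra
  have "(X1 + Y1)\<^sup>2 \<le> 2 * X1\<^sup>2 + 2 * Y1\<^sup>2" "(X2 + Y2)\<^sup>2 \<le> 2 * X2\<^sup>2 + 2 * Y2\<^sup>2"
    by (smt (verit) power2_diff power2_sum zero_le_power2)+
  then show ?thesis unfolding L R by linarith
qed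

lemma wgt_bound:
  fixes x q lo hi :: real
  assumes "0 < x" "lo \<le> q" "q \<le> hi"
  shows "x powr (- q) \<le> wgt (- hi) (- lo) x"
proof (cases "x \<le> 1")
  case True
  then show ?thesis unfolding wgt_def using assms by (simp add: powr_mono')
next
  case False
  then show ?thesis unfolding wgt_def using assms by (simp add: powr_mono)
qed

lemma one_minus_cos_bounds: "0 \<le> 1 - cos y" "1 - cos y \<le> min 2 ((y::real)\<^sup>2 / 2)"
  using one_minus_cos_le[of y] cos_ge_minus_one[of y] cos_le_one[of y] by auto

lemma abs_ABC:
  fixes A B C a b c :: real
  assumes "0 \<le> A" "A \<le> min 2 (a / 2)" "0 \<le> B" "B \<le> min 2 (b / 2)" "0 \<le> C" "C \<le> min 2 (c / 2)"
  shows "\<bar>A + B - C\<bar> \<le> min 4 (a + b + c)"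
  using assms by (simp add: min_def split: if_splits) linarith?

lemma Fint_abs_bound:
  assumes ab: "2 * h1 \<le> H t + H s" "H t + H s \<le> 2 * h2"
  shows "\<bar>Fint H t s u\<bar> \<le> min 4 ((sqrt (t\<^sup>2 + s\<^sup>2 + (t - s)\<^sup>2) * u)\<^sup>2) * wgt (- (2 * h2 + 1)) (- (2 * h1 + 1)) \<bar>u\<bar>"
proof (cases "u = 0")
  case True then show ?thesis by (simp add: Fint_def)
next
  case False
  define K where "K = t\<^sup>2 + s\<^sup>2 + (t - s)\<^sup>2"
  have K0: "0 \<le> K" unfolding K_def by simp
  have sq: "(sqrt K * u)\<^sup>2 = K * u\<^sup>2" using K0 by (simp add: power_mult_distrib)
  define N where "N = 1 - cos (t * u) - cos (s * u) + cos ((t - s) * u)"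
  have N: "N = (1 - cos (t * u)) + (1 - cos (s * u)) - (1 - cos ((t - s) * u))" unfolding N_def by simp
  note b1 = one_minus_cos_bounds[of "t * u"] and b2 = one_minus_cos_bounds[of "s * u"]
    and b3 = one_minus_cos_bounds[of "(t - s) * u"]
  have "\<bar>N\<bar> \<le> min 4 ((t * u)\<^sup>2 + (s * u)\<^sup>2 + ((t - s) * u)\<^sup>2)"
    unfolding N by (rule abs_ABC[OF b1(1) b1(2) b2(1) b2(2) b3(1) b3(2)])
  also have "(t * u)\<^sup>2 + (s * u)\<^sup>2 + ((t - s) * u)\<^sup>2 = K * u\<^sup>2"
    unfolding K_def by (simp add: power_mult_distrib distrib_right)
  finally have "\<bar>N\<bar> \<le> min 4 (K * u\<^sup>2)" .
  moreover have "1 / \<bar>u\<bar> powr (H t + H s + 1) \<le> wgt (- (2 * h2 + 1)) (- (2 * h1 + 1)) \<bar>u\<bar>"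
  proof -
    have e: "1 / \<bar>u\<bar> powr (H t + H s + 1) = \<bar>u\<bar> powr (- (H t + H s + 1))"
      by (simp only: powr_minus divide_inverse mult_1_left)
    show ?thesis unfolding e by (rule wgt_bound) (use ab False in auto)
  qed
  ultimately have "\<bar>N\<bar> * (1 / \<bar>u\<bar> powr (H t + H s + 1)) \<le> min 4 (K * u\<^sup>2) * wgt (- (2 * h2 + 1)) (- (2 * h1 + 1)) \<bar>u\<bar>"
    by (intro mult_mono) auto
  then show ?thesis unfolding Fint_def N_def[symmetric] sq[symmetric] K_def[symmetric]
    by (simp add: abs_divide)
qed

lemma integrable_bound_nn:
  fixes f :: "real \<Rightarrow> real"
  assumes "f \<in> borel_measurable borel" "\<And>u. \<bar>f u\<bar> \<le> g u" "(\<integral>\<^sup>+u. ennreal (g u) \<partial>lborel) < \<infinity>"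
  shows "integrable lborel f"
proof (rule integrableI_bounded)
  show "f \<in> borel_measurable lborel" using assms by simp
  have "(\<integral>\<^sup>+u. ennreal (norm (f u)) \<partial>lborel) \<le> (\<integral>\<^sup>+u. ennreal (g u) \<partial>lborel)"
    using assms(2) by (intro nn_integral_mono ennreal_leI) simp
  then show "(\<integral>\<^sup>+u. ennreal (norm (f u)) \<partial>lborel) < \<infinity>" using assms(3) by (simp add: le_less_trans)
qed

lemma Fint_integrable:
  assumes h: "0 < h1" "h1 < h2" "h2 < 1"
    and ab: "2 * h1 \<le> H t + H s" "H t + H s \<le> 2 * h2"
  shows "integrable lborel (Fint H t s)"
proof (rule integrable_bound_nn[OF Fint_measurable Fint_abs_bound[where H=H and t=t and s=s, OF ab]])
  show "(\<integral>\<^sup>+u. ennreal (min 4 ((sqrt (t\<^sup>2 + s\<^sup>2 + (t - s)\<^sup>2) * u)\<^sup>2) * wgt (- (2 * h2 + 1)) (- (2 * h1 + 1)) \<bar>u\<bar>) \<partial>lborel) < \<infinity>"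
    using key_nn[of "sqrt (t\<^sup>2 + s\<^sup>2 + (t - s)\<^sup>2)" 1 0 "- (2 * h2 + 1)" "- (2 * h1 + 1)"] h
    by (simp add: le_less_trans)
qed

lemma lnsq_wgt:
  fixes x \<eta> e0 e1 :: real
  assumes "0 < x" "0 < \<eta>"
  shows "(ln x)\<^sup>2 * wgt e0 e1 x \<le> wgt (e0 - 2 * \<eta>) (e1 + 2 * \<eta>) x / \<eta>\<^sup>2"
proof (cases "x \<le> 1")
  case True
  have "\<bar>ln x\<bar> \<le> x powr (-\<eta>) / \<eta>" using ln_le_powr_small assms True by blast
  then have "(ln x)\<^sup>2 \<le> (x powr (-\<eta>) / \<eta>)\<^sup>2"
    by (metis abs_ge_zero power2_abs power_mono)
  also have "\<dots> = x powr (- 2 * \<eta>) / \<eta>\<^sup>2"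
    by (simp add: power_divide power2_eq_square powr_add[symmetric])
  finally have "(ln x)\<^sup>2 * x powr e0 \<le> x powr (- 2 * \<eta>) / \<eta>\<^sup>2 * x powr e0"
    by (intro mult_right_mono) auto
  also have "\<dots> = x powr (e0 - 2 * \<eta>) / \<eta>\<^sup>2" by (simp add: powr_add[symmetric])
  finally show ?thesis using True by (simp add: wgt_def)
next
  case False
  have "\<bar>ln x\<bar> \<le> x powr \<eta> / \<eta>" using ln_le_powr_large assms False by simp
  then have "(ln x)\<^sup>2 \<le> (x powr \<eta> / \<eta>)\<^sup>2"
    by (metis abs_ge_zero power2_abs power_mono)
  also have "\<dots> = x powr (2 * \<eta>) / \<eta>\<^sup>2"
    by (simp add: power_divide power2_eq_square powr_add[symmetric])
  finally have "(ln x)\<^sup>2 * x powr e1 \<le> x powr (2 * \<eta>) / \<eta>\<^sup>2 * x powr e1"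
    by (intro mult_right_mono) auto
  also have "\<dots> = x powr (e1 + 2 * \<eta>) / \<eta>\<^sup>2" by (simp add: powr_add[symmetric] add.commute)
  finally show ?thesis using False by (simp add: wgt_def)
qed

lemma G_pointwise:
  fixes h1 h2 \<eta> :: real
  assumes ha: "h1 \<le> H t" "H t \<le> h2" and hb: "h1 \<le> H s" "H s \<le> h2" and \<eta>: "0 < \<eta>"
  shows "Fint H t t u + Fint H s s u - 2 * Fint H t s u
    \<le> 2 * wgt (- (2 * h2 + 1)) (- (2 * h1 + 1)) \<bar>u\<bar> * min 4 (((t - s) * u)\<^sup>2)
      + 2 * ((H t - H s)\<^sup>2 / \<eta>\<^sup>2) * wgt (- (2 * h2 + 1) - 2 * \<eta>) (- (2 * h1 + 1) + 2 * \<eta>) \<bar>u\<bar> * min 4 ((s * u)\<^sup>2)"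
proof (cases "u = 0")
  case True then show ?thesis by (simp add: Fint_def)
next
  case False
  define x where "x = \<bar>u\<bar>"
  have x: "0 < x" using False by (simp add: x_def)
  define a where "a = H t"
  define b where "b = H s"
  define p where "p = x powr (- (a + 1/2))"
  define r where "r = x powr (- (b + 1/2))"
  define w1 where "w1 = wgt (- (2 * h2 + 1)) (- (2 * h1 + 1)) x"
  define w2 where "w2 = wgt (- (2 * h2 + 1) - 2 * \<eta>) (- (2 * h1 + 1) + 2 * \<eta>) x"
  define c1 where "c1 = cos (t * u)"
  define s1 where "s1 = sin (t * u)"
  define c2 where "c2 = cos (s * u)"
  define s2 where "s2 = sin (s * u)"
  have inv: "1 / x powr q = x powr (- q)" for q
    by (simp only: powr_minus divide_inverse mult_1_left)
  have pp: "1 / x powr (2 * a + 1) = p\<^sup>2"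
  proof -
    have "p\<^sup>2 = x powr (- (a + 1/2) + - (a + 1/2))"
      unfolding p_def power2_eq_square by (rule powr_add[symmetric])
    also have "\<dots> = x powr (- (2 * a + 1))" by (intro arg_cong[where f="(powr) x"]) simp
    finally show ?thesis by (simp only: inv)
  qed
  have rr: "1 / x powr (2 * b + 1) = r\<^sup>2"
  proof -
    have "r\<^sup>2 = x powr (- (b + 1/2) + - (b + 1/2))"
      unfolding r_def power2_eq_square by (rule powr_add[symmetric])
    also have "\<dots> = x powr (- (2 * b + 1))" by (intro arg_cong[where f="(powr) x"]) simp
    finally show ?thesis by (simp only: inv)
  qed
  have pr: "1 / x powr (a + b + 1) = p * r"
  proof -
    have "p * r = x powr (- (a + 1/2) + - (b + 1/2))"
      unfolding p_def r_def by (rule powr_add[symmetric])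
    also have "\<dots> = x powr (- (a + b + 1))" by (intro arg_cong[where f="(powr) x"]) simp
    finally show ?thesis by (simp only: inv)
  qed
  have cd: "cos ((t - s) * u) = c1 * c2 + s1 * s2"
    unfolding c1_def c2_def s1_def s2_def by (simp add: left_diff_distrib cos_diff)
  have Ftt: "Fint H t t u = p\<^sup>2 * (2 - 2 * c1)"
  proof -
    have e1: "H t + H t + 1 = 2 * a + 1" unfolding a_def by simp
    have e2: "1 - cos (t * u) - cos (t * u) + cos ((t - t) * u) = 2 - 2 * c1" unfolding c1_def by simp
    have "Fint H t t u = (2 - 2 * c1) / x powr (2 * a + 1)"
      unfolding Fint_def e1 e2 x_def ..
    then show ?thesis unfolding pp[symmetric] by (simp only: divide_inverse mult_1_left mult.commute)
  qed
  have Fss: "Fint H s s u = r\<^sup>2 * (2 - 2 * c2)"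
  proof -
    have e1: "H s + H s + 1 = 2 * b + 1" unfolding b_def by simp
    have e2: "1 - cos (s * u) - cos (s * u) + cos ((s - s) * u) = 2 - 2 * c2" unfolding c2_def by simp
    have "Fint H s s u = (2 - 2 * c2) / x powr (2 * b + 1)"
      unfolding Fint_def e1 e2 x_def ..
    then show ?thesis unfolding rr[symmetric] by (simp only: divide_inverse mult_1_left mult.commute)
  qed
  have Fts: "Fint H t s u = (p * r) * (1 - c1 - c2 + (c1 * c2 + s1 * s2))"
  proof -
    have "Fint H t s u = (1 - c1 - c2 + (c1 * c2 + s1 * s2)) / x powr (a + b + 1)"
      unfolding Fint_def cd[symmetric] unfolding c1_def c2_def x_def a_def b_def ..
    then show ?thesis unfolding pr[symmetric] by (simp only: divide_inverse mult_1_left mult.commute)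
  qed
  have step1: "Fint H t t u + Fint H s s u - 2 * Fint H t s u
      \<le> 2 * p\<^sup>2 * (2 - 2 * (c1 * c2 + s1 * s2)) + 2 * (p - r)\<^sup>2 * (2 - 2 * c2)"
    unfolding Ftt Fss Fts by (rule alg_ineq) (simp_all add: c1_def s1_def c2_def s2_def)
  have p2w: "p\<^sup>2 \<le> w1"
    unfolding pp[symmetric] w1_def inv using x ha unfolding a_def by (intro wgt_bound) auto
  have r2w: "r\<^sup>2 \<le> w1"
    unfolding rr[symmetric] w1_def inv using x hb unfolding b_def by (intro wgt_bound) auto
  have "\<bar>p - r\<bar> \<le> \<bar>a - b\<bar> * \<bar>ln x\<bar> * max p r"
  proof -
    have "p = exp (- (a + 1/2) * ln x)" "r = exp (- (b + 1/2) * ln x)"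
      unfolding p_def r_def using x by (simp_all add: powr_def)
    then have "\<bar>p - r\<bar> \<le> \<bar>- (a + 1/2) * ln x - - (b + 1/2) * ln x\<bar> * max p r"
      using exp_diff_le by simp
    also have "- (a + 1/2) * ln x - - (b + 1/2) * ln x = (b - a) * ln x"
      by (simp add: algebra_simps)
    also have "\<bar>(b - a) * ln x\<bar> = \<bar>a - b\<bar> * \<bar>ln x\<bar>"
      by (simp add: abs_mult abs_minus_commute)
    finally show ?thesis .
  qed
  then have "(p - r)\<^sup>2 \<le> (\<bar>a - b\<bar> * \<bar>ln x\<bar> * max p r)\<^sup>2"
    by (metis abs_ge_zero power2_abs power_mono)
  also have "\<dots> = (a - b)\<^sup>2 * ((ln x)\<^sup>2 * (max p r)\<^sup>2)"
    by (simp add: power_mult_distrib)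
  also have "(max p r)\<^sup>2 \<le> w1"
    using p2w r2w by (simp add: max_def)
  then have "(a - b)\<^sup>2 * ((ln x)\<^sup>2 * (max p r)\<^sup>2) \<le> (a - b)\<^sup>2 * ((ln x)\<^sup>2 * w1)"
    by (intro mult_left_mono) auto
  also have "(ln x)\<^sup>2 * w1 \<le> w2 / \<eta>\<^sup>2"
    unfolding w1_def w2_def using lnsq_wgt[OF x \<eta>] by simp
  then have "(a - b)\<^sup>2 * ((ln x)\<^sup>2 * w1) \<le> (a - b)\<^sup>2 * (w2 / \<eta>\<^sup>2)"
    by (intro mult_left_mono) auto
  finally have prw: "(p - r)\<^sup>2 \<le> (a - b)\<^sup>2 / \<eta>\<^sup>2 * w2" by simp
  have w1n: "0 \<le> w1" "0 \<le> w2" unfolding w1_def w2_def by simp_all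
  have m1: "2 - 2 * (c1 * c2 + s1 * s2) \<le> min 4 (((t - s) * u)\<^sup>2)"
    using two_minus_cos_le[of "(t - s) * u"] cd by simp
  have m2: "2 - 2 * c2 \<le> min 4 ((s * u)\<^sup>2)"
    using two_minus_cos_le[of "s * u"] c2_def by simp
  have n1: "0 \<le> 2 - 2 * (c1 * c2 + s1 * s2)" using cd cos_le_one[of "(t - s) * u"] by simp
  have n2: "0 \<le> 2 - 2 * c2" using cos_le_one[of "s * u"] c2_def by simp
  have "2 * p\<^sup>2 * (2 - 2 * (c1 * c2 + s1 * s2)) \<le> 2 * w1 * min 4 (((t - s) * u)\<^sup>2)"
    using p2w m1 n1 w1n by (intro mult_mono mult_left_mono) auto
  moreover have "2 * (p - r)\<^sup>2 * (2 - 2 * c2) \<le> 2 * ((a - b)\<^sup>2 / \<eta>\<^sup>2 * w2) * min 4 ((s * u)\<^sup>2)"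
    using prw m2 n2 w1n by (intro mult_mono mult_left_mono) auto
  ultimately have "Fint H t t u + Fint H s s u - 2 * Fint H t s u \<le>
     2 * w1 * min 4 (((t - s) * u)\<^sup>2) + 2 * ((a - b)\<^sup>2 / \<eta>\<^sup>2 * w2) * min 4 ((s * u)\<^sup>2)"
    using step1 by linarith
  then show ?thesis unfolding w1_def w2_def x_def a_def b_def
    by (simp only: mult.assoc)
qed

lemma V_bound:
  fixes h1 h2 \<eta> \<theta>0 \<theta>1 \<theta>0' \<theta>1' :: real
  assumes h: "0 < h1" "h1 < h2" "h2 < 1"
    and ha: "h1 \<le> H t" "H t \<le> h2" and hb: "h1 \<le> H s" "H s \<le> h2" and \<eta>: "0 < \<eta>"
    and st: "0 \<le> s" "s \<le> t"
    and th: "0 \<le> \<theta>0" "\<theta>0 \<le> 1" "0 \<le> \<theta>1" "\<theta>1 \<le> 1" "0 \<le> \<theta>0'" "\<theta>0' \<le> 1" "0 \<le> \<theta>1'" "\<theta>1' \<le> 1"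
    and c1: "2 * \<theta>0 - (2 * h2 + 1) > -1" "2 * \<theta>1 - (2 * h1 + 1) < -1"
    and c2: "2 * \<theta>0' - (2 * h2 + 1) - 2 * \<eta> > -1" "2 * \<theta>1' - (2 * h1 + 1) + 2 * \<eta> < -1"
  shows "mbm_cov H t t + mbm_cov H s s - 2 * mbm_cov H t s
    \<le> 2 * (8 * (t - s) powr (2 * \<theta>0) / (2 * \<theta>0 + - (2 * h2 + 1) + 1) - 8 * (t - s) powr (2 * \<theta>1) / (2 * \<theta>1 + - (2 * h1 + 1) + 1))
     + 2 * ((H t - H s)\<^sup>2 / \<eta>\<^sup>2) * (8 * s powr (2 * \<theta>0') / (2 * \<theta>0' + (- (2 * h2 + 1) - 2 * \<eta>) + 1) - 8 * s powr (2 * \<theta>1') / (2 * \<theta>1' + (- (2 * h1 + 1) + 2 * \<eta>) + 1))"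
    (is "_ \<le> 2 * ?B1 + ?c * ?B2")
proof -
  let ?w1 = "wgt (- (2 * h2 + 1)) (- (2 * h1 + 1))"
  let ?w2 = "wgt (- (2 * h2 + 1) - 2 * \<eta>) (- (2 * h1 + 1) + 2 * \<eta>)"
  define G where "G u = Fint H t t u + Fint H s s u - 2 * Fint H t s u" for u
  have i1: "integrable lborel (Fint H t t)" using h ha by (intro Fint_integrable) auto
  have i2: "integrable lborel (Fint H s s)" using h hb by (intro Fint_integrable) auto
  have i3: "integrable lborel (Fint H t s)" using h ha hb by (intro Fint_integrable) auto
  have eqV: "mbm_cov H t t + mbm_cov H s s - 2 * mbm_cov H t s = (LBINT u. G u)"
    unfolding mbm_cov_Fint G_def using i1 i2 i3 by simp
  have K1: "(\<integral>\<^sup>+u. ennreal (min 4 (((t - s) * u)\<^sup>2) * ?w1 \<bar>u\<bar>) \<partial>lborel) \<le> ennreal ?B1"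
    using key_nn[of "t - s" \<theta>0 \<theta>1 "- (2 * h2 + 1)" "- (2 * h1 + 1)"] st th c1 by simp
  have K2: "(\<integral>\<^sup>+u. ennreal (min 4 ((s * u)\<^sup>2) * ?w2 \<bar>u\<bar>) \<partial>lborel) \<le> ennreal ?B2"
    using key_nn[of s \<theta>0' \<theta>1' "- (2 * h2 + 1) - 2 * \<eta>" "- (2 * h1 + 1) + 2 * \<eta>"] st th c2 by simp
  have B1: "0 \<le> ?B1"
  proof -
    have "0 \<le> 8 * (t - s) powr (2 * \<theta>0) / (2 * \<theta>0 + - (2 * h2 + 1) + 1)" using c1 by (intro divide_nonneg_pos) auto
    moreover have "8 * (t - s) powr (2 * \<theta>1) / (2 * \<theta>1 + - (2 * h1 + 1) + 1) \<le> 0" using c1 by (intro divide_nonneg_neg) auto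
    ultimately show ?thesis by linarith
  qed
  have B2: "0 \<le> ?B2"
  proof -
    have "0 \<le> 8 * s powr (2 * \<theta>0') / (2 * \<theta>0' + (- (2 * h2 + 1) - 2 * \<eta>) + 1)" using c2 by (intro divide_nonneg_pos) auto
    moreover have "8 * s powr (2 * \<theta>1') / (2 * \<theta>1' + (- (2 * h1 + 1) + 2 * \<eta>) + 1) \<le> 0" using c2 by (intro divide_nonneg_neg) auto
    ultimately show ?thesis by linarith
  qed
  have c0: "0 \<le> ?c" by simp
  have pw: "G u \<le> 2 * (min 4 (((t - s) * u)\<^sup>2) * ?w1 \<bar>u\<bar>) + ?c * (min 4 ((s * u)\<^sup>2) * ?w2 \<bar>u\<bar>)" for u
    using G_pointwise[where H=H and t=t and s=s, OF ha hb \<eta>, of u] unfolding G_def by (simp add: mult_ac)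
  have "(\<integral>\<^sup>+u. ennreal (G u) \<partial>lborel) \<le>
      (\<integral>\<^sup>+u. ennreal 2 * ennreal (min 4 (((t - s) * u)\<^sup>2) * ?w1 \<bar>u\<bar>) + ennreal ?c * ennreal (min 4 ((s * u)\<^sup>2) * ?w2 \<bar>u\<bar>) \<partial>lborel)"
  proof (intro nn_integral_mono)
    fix u
    have "ennreal (G u) \<le> ennreal (2 * (min 4 (((t - s) * u)\<^sup>2) * ?w1 \<bar>u\<bar>) + ?c * (min 4 ((s * u)\<^sup>2) * ?w2 \<bar>u\<bar>))"
      using pw by (rule ennreal_leI)
    also have "\<dots> = ennreal (2 * (min 4 (((t - s) * u)\<^sup>2) * ?w1 \<bar>u\<bar>)) + ennreal (?c * (min 4 ((s * u)\<^sup>2) * ?w2 \<bar>u\<bar>))"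
      by (rule ennreal_plus) (use c0 in auto)
    also have "ennreal (2 * (min 4 (((t - s) * u)\<^sup>2) * ?w1 \<bar>u\<bar>)) = ennreal 2 * ennreal (min 4 (((t - s) * u)\<^sup>2) * ?w1 \<bar>u\<bar>)"
      by (rule ennreal_mult') simp
    also have "ennreal (?c * (min 4 ((s * u)\<^sup>2) * ?w2 \<bar>u\<bar>)) = ennreal ?c * ennreal (min 4 ((s * u)\<^sup>2) * ?w2 \<bar>u\<bar>)"
      by (rule ennreal_mult') (rule c0)
    finally show "ennreal (G u) \<le> ennreal 2 * ennreal (min 4 (((t - s) * u)\<^sup>2) * ?w1 \<bar>u\<bar>) + ennreal ?c * ennreal (min 4 ((s * u)\<^sup>2) * ?w2 \<bar>u\<bar>)" .
  qed
  also have "\<dots> = ennreal 2 * (\<integral>\<^sup>+u. ennreal (min 4 (((t - s) * u)\<^sup>2) * ?w1 \<bar>u\<bar>) \<partial>lborel)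
      + ennreal ?c * (\<integral>\<^sup>+u. ennreal (min 4 ((s * u)\<^sup>2) * ?w2 \<bar>u\<bar>) \<partial>lborel)"
    by (subst nn_integral_add) (auto simp: nn_integral_cmult)
  also have "\<dots> \<le> ennreal 2 * ennreal ?B1 + ennreal ?c * ennreal ?B2"
    by (intro add_mono mult_left_mono K1 K2) auto
  also have "\<dots> = ennreal (2 * ?B1 + ?c * ?B2)"
  proof -
    have e1: "ennreal 2 * ennreal ?B1 = ennreal (2 * ?B1)" by (rule ennreal_mult'[symmetric]) simp
    have e2: "ennreal ?c * ennreal ?B2 = ennreal (?c * ?B2)" by (rule ennreal_mult'[symmetric]) (rule c0)
    have e3: "ennreal (2 * ?B1) + ennreal (?c * ?B2) = ennreal (2 * ?B1 + ?c * ?B2)"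
      by (rule ennreal_plus[symmetric]) (use B1 B2 c0 in auto)
    show ?thesis unfolding e1 e2 e3 ..
  qed
  finally have "(\<integral>\<^sup>+u. ennreal (G u) \<partial>lborel) \<le> ennreal (2 * ?B1 + ?c * ?B2)" .
  then have "(LBINT u. G u) \<le> 2 * ?B1 + ?c * ?B2"
    using B1 B2 c0 by (intro integral_real_bounded) auto
  then show ?thesis using eqV by simp
qed

lemma mbm_cov_sym: "mbm_cov H t s = mbm_cov H s t"
proof -
  have "(1 - cos (t * u) - cos (s * u) + cos ((t - s) * u)) / \<bar>u\<bar> powr (H t + H s + 1)
      = (1 - cos (s * u) - cos (t * u) + cos ((s - t) * u)) / \<bar>u\<bar> powr (H s + H t + 1)" for u
  proof -
    have "cos ((t - s) * u) = cos ((s - t) * u)"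
      by (metis cos_minus minus_diff_eq mult_minus_left)
    then show ?thesis by (simp add: add_ac)
  qed
  then show ?thesis unfolding mbm_cov_def by simp
qed

lemma is_mbm_D:
  assumes "is_mbm M H Y"
  shows "prob_space M" "\<And>t. 0 \<le> t \<Longrightarrow> Y t \<in> borel_measurable M"
    "\<And>S a \<theta>. finite S \<Longrightarrow> S \<subseteq> {0..} \<Longrightarrow>
        char (distr M borel (\<lambda>\<omega>. \<Sum>t\<in>S. a t * Y t \<omega>)) \<theta> =
        complex_of_real (exp (- (\<theta>\<^sup>2 / 2) * (\<Sum>t\<in>S. \<Sum>s\<in>S. a t * a s * mbm_cov H t s)))"
    "AE \<omega> in M. continuous_on {0..} (\<lambda>t. Y t \<omega>)"
  using assms unfolding is_mbm_def by auto

lemma char_incr: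
  assumes Y: "is_mbm M H Y" and st: "0 \<le> s" "0 \<le> t" "s \<noteq> t"
  shows "char (distr M borel (\<lambda>\<omega>. Y t \<omega> - Y s \<omega>)) \<theta> =
     complex_of_real (exp (- (\<theta>\<^sup>2 / 2) * (mbm_cov H t t + mbm_cov H s s - 2 * mbm_cov H t s)))"
proof -
  define a where "a x = (if x = t then 1 else - 1 :: real)" for x
  have sum1: "(\<Sum>x\<in>{t, s}. a x * Y x \<omega>) = Y t \<omega> - Y s \<omega>" for \<omega>
    using st by (simp add: a_def)
  have sum2: "(\<Sum>x\<in>{t, s}. \<Sum>y\<in>{t, s}. a x * a y * mbm_cov H x y) = mbm_cov H t t + mbm_cov H s s - 2 * mbm_cov H t s"
    using st by (simp add: a_def mbm_cov_sym[of H s t])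
  show ?thesis
    using is_mbm_D(3)[OF Y, of "{t, s}" a \<theta>] st unfolding sum1 sum2 by simp
qed

lemma char_single:
  assumes Y: "is_mbm M H Y" and t: "0 \<le> t"
  shows "char (distr M borel (Y t)) \<theta> = complex_of_real (exp (- (\<theta>\<^sup>2 / 2) * mbm_cov H t t))"
  using is_mbm_D(3)[OF Y, of "{t}" "\<lambda>_. 1" \<theta>] t by simp

lemma tail_incr:
  assumes Y: "is_mbm M H Y" and st: "0 \<le> s" "0 \<le> t"
    and V: "mbm_cov H t t + mbm_cov H s s - 2 * mbm_cov H t s \<le> B" and B: "0 < B" and x: "0 \<le> x"
  shows "measure M {\<omega>\<in>space M. x < \<bar>Y t \<omega> - Y s \<omega>\<bar>} \<le> sqrt 2 * exp (- x\<^sup>2 / (4 * B))"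
proof (cases "s = t")
  case True then show ?thesis using x by simp
next
  case False
  show ?thesis
    by (rule gauss_tail[OF is_mbm_D(1)[OF Y] _ char_incr[OF Y st(1) st(2) False] B V x])
       (use is_mbm_D(2)[OF Y] st in auto)
qed

lemma tail_single:
  assumes Y: "is_mbm M H Y" and t: "0 \<le> t"
    and V: "mbm_cov H t t \<le> B" and B: "0 < B" and x: "0 \<le> x"
  shows "measure M {\<omega>\<in>space M. x < \<bar>Y t \<omega>\<bar>} \<le> sqrt 2 * exp (- x\<^sup>2 / (4 * B))"
  by (rule gauss_tail[OF is_mbm_D(1)[OF Y] is_mbm_D(2)[OF Y t] char_single[OF Y t] B V x])

locale mbm_setup =
  fixes H :: "real \<Rightarrow> real" and M :: "'a measure" and Y :: "real \<Rightarrow> 'a \<Rightarrow> real"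
    and h1 h2 D \<kappa> \<delta> :: real
  assumes h: "0 < h1" "h1 < h2" "h2 < 1"
    and Hr: "\<And>t. 0 \<le> t \<Longrightarrow> h1 \<le> H t \<and> H t \<le> h2"
    and DK: "D > 0" "0 < \<kappa>" "\<kappa> \<le> 1"
    and Hol: "\<And>s t. 0 < s \<Longrightarrow> s \<le> t \<Longrightarrow> \<bar>H t - H s\<bar> \<le> D * (t - s) powr \<kappa>"
    and Y: "is_mbm M H Y"
    and \<delta>: "0 < \<delta>"
begin

definition "\<eta> = min (min \<delta> h1) (1 - h2) / 4"
definition "\<rho> = h2 + 2 * \<eta>"
definition "\<gamma> = min (h1 / 2) \<kappa>"
definition "K0 = (8 / \<eta> + 16 / h1) + 2 * D\<^sup>2 / \<eta>\<^sup>2 * (4 / \<eta> + 8 / (h1 - 2 * \<eta>))"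

lemma \<eta>_pos: "0 < \<eta>" and \<eta>_le: "\<eta> \<le> \<delta> / 4" "\<eta> \<le> h1 / 4" "\<eta> \<le> (1 - h2) / 4"
  using h \<delta> by (auto simp: \<eta>_def min_def)

lemma \<rho>_props: "h2 < \<rho>" "\<rho> < h2 + \<delta>" "\<rho> < 1" "h1 \<le> 2 * \<rho>"
  using \<eta>_pos \<eta>_le h by (auto simp: \<rho>_def)

lemma \<gamma>_props: "0 < \<gamma>" "\<gamma> \<le> h1 / 2" "\<gamma> \<le> \<kappa>"
  using h DK by (auto simp: \<gamma>_def)

lemma K0_pos: "0 < K0"
proof -
  have "0 < 8 / \<eta> + 16 / h1" using \<eta>_pos h by (intro add_pos_pos divide_pos_pos) auto
  moreover have "0 \<le> 2 * D\<^sup>2 / \<eta>\<^sup>2 * (4 / \<eta> + 8 / (h1 - 2 * \<eta>))"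
    using \<eta>_pos \<eta>_le h by (intro mult_nonneg_nonneg add_nonneg_nonneg) auto
  ultimately show ?thesis unfolding K0_def by linarith
qed

lemma V_raw:
  assumes st: "0 \<le> s" "s \<le> t"
  shows "mbm_cov H t t + mbm_cov H s s - 2 * mbm_cov H t s
    \<le> 2 * (4 * (t - s) powr (2 * (h2 + \<eta>)) / \<eta> + 8 * (t - s) powr h1 / h1)
     + 2 * ((H t - H s)\<^sup>2 / \<eta>\<^sup>2) * (4 * s powr (2 * \<rho>) / \<eta> + 8 * s powr h1 / (h1 - 2 * \<eta>))"
proof -
  have ha: "h1 \<le> H t" "H t \<le> h2" and hb: "h1 \<le> H s" "H s \<le> h2" using Hr st by auto
  note e = \<eta>_pos \<eta>_le
  have "mbm_cov H t t + mbm_cov H s s - 2 * mbm_cov H t s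
    \<le> 2 * (8 * (t - s) powr (2 * (h2 + \<eta>)) / (2 * (h2 + \<eta>) + - (2 * h2 + 1) + 1) - 8 * (t - s) powr (2 * (h1 / 2)) / (2 * (h1 / 2) + - (2 * h1 + 1) + 1))
     + 2 * ((H t - H s)\<^sup>2 / \<eta>\<^sup>2) * (8 * s powr (2 * (h2 + 2 * \<eta>)) / (2 * (h2 + 2 * \<eta>) + (- (2 * h2 + 1) - 2 * \<eta>) + 1) - 8 * s powr (2 * (h1 / 2)) / (2 * (h1 / 2) + (- (2 * h1 + 1) + 2 * \<eta>) + 1))"
    by (rule V_bound[OF h ha hb \<eta>_pos st]) (use e h in auto)
  also have "8 * (t - s) powr (2 * (h2 + \<eta>)) / (2 * (h2 + \<eta>) + - (2 * h2 + 1) + 1) = 4 * (t - s) powr (2 * (h2 + \<eta>)) / \<eta>"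
    using e by (simp add: field_simps)
  also have "8 * (t - s) powr (2 * (h1 / 2)) / (2 * (h1 / 2) + - (2 * h1 + 1) + 1) = - (8 * (t - s) powr h1 / h1)"
    using h by (simp add: field_simps)
  also have "8 * s powr (2 * (h2 + 2 * \<eta>)) / (2 * (h2 + 2 * \<eta>) + (- (2 * h2 + 1) - 2 * \<eta>) + 1) = 4 * s powr (2 * \<rho>) / \<eta>"
    using e by (simp add: field_simps \<rho>_def)
  also have "8 * s powr (2 * (h1 / 2)) / (2 * (h1 / 2) + (- (2 * h1 + 1) + 2 * \<eta>) + 1) = - (8 * s powr h1 / (h1 - 2 * \<eta>))"
    using e h by (simp add: field_simps)
  finally show ?thesis by simp
qed

end

lemma powr_le_max1:
  fixes x a b :: real
  assumes "0 \<le> x" "0 \<le> a" "a \<le> b"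
  shows "x powr a \<le> max 1 x powr b"
proof -
  have "x powr a \<le> max 1 x powr a" using assms by (intro powr_mono2) auto
  also have "\<dots> \<le> max 1 x powr b" using assms by (intro powr_mono) auto
  finally show ?thesis .
qed

lemma mbm_cov_0: "mbm_cov H t 0 = 0"
  unfolding mbm_cov_def by simp

lemma mbm_cov_00: "mbm_cov H 0 0 = 0"
  by (rule mbm_cov_0)

context mbm_setup
begin

definition "L t = max 1 t powr (2 * \<rho>)"

lemma L_ge1: "1 \<le> L t"
  unfolding L_def using \<rho>_props h by (intro ge_one_powr_ge_zero) auto

lemma L_mono: "t \<le> t' \<Longrightarrow> L t \<le> L t'"
  unfolding L_def using \<rho>_props h by (intro powr_mono2) auto

lemma V_small:
  assumes st: "0 \<le> s" "s \<le> t" "t - s \<le> 1"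
  shows "mbm_cov H t t + mbm_cov H s s - 2 * mbm_cov H t s \<le> K0 * L t * (t - s) powr (2 * \<gamma>)"
proof -
  define d where "d = t - s"
  have d: "0 \<le> d" "d \<le> 1" using st by (auto simp: d_def)
  note e = \<eta>_pos \<eta>_le
  have a1: "d powr (2 * (h2 + \<eta>)) \<le> d powr (2 * \<gamma>)"
    using d \<gamma>_props h e by (intro powr_mono') auto
  have a2: "d powr h1 \<le> d powr (2 * \<gamma>)"
    using d \<gamma>_props h e by (intro powr_mono') auto
  have P1: "2 * (4 * d powr (2 * (h2 + \<eta>)) / \<eta> + 8 * d powr h1 / h1) \<le> (8 / \<eta> + 16 / h1) * d powr (2 * \<gamma>)"
  proof -
    have q1: "4 * d powr (2 * (h2 + \<eta>)) / \<eta> \<le> 4 * d powr (2 * \<gamma>) / \<eta>"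
      using a1 e by (intro divide_right_mono) auto
    have q2: "8 * d powr h1 / h1 \<le> 8 * d powr (2 * \<gamma>) / h1"
      using a2 h by (intro divide_right_mono) auto
    have "2 * (4 * d powr (2 * (h2 + \<eta>)) / \<eta> + 8 * d powr h1 / h1) \<le> 2 * (4 * d powr (2 * \<gamma>) / \<eta> + 8 * d powr (2 * \<gamma>) / h1)"
      using q1 q2 by (intro mult_left_mono add_mono) auto
    also have "\<dots> = (8 / \<eta> + 16 / h1) * d powr (2 * \<gamma>)"
      by (simp add: field_simps)
    finally show ?thesis .
  qed
  have Lt: "1 \<le> L t" by (rule L_ge1)
  have c0: "0 \<le> 4 / \<eta> + 8 / (h1 - 2 * \<eta>)" using e h by (intro add_nonneg_nonneg) auto
  have P2: "2 * ((H t - H s)\<^sup>2 / \<eta>\<^sup>2) * (4 * s powr (2 * \<rho>) / \<eta> + 8 * s powr h1 / (h1 - 2 * \<eta>))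
      \<le> 2 * D\<^sup>2 / \<eta>\<^sup>2 * (4 / \<eta> + 8 / (h1 - 2 * \<eta>)) * L t * d powr (2 * \<gamma>)"
  proof (cases "s = 0")
    case True
    have "0 \<le> 2 * D\<^sup>2 / \<eta>\<^sup>2 * (4 / \<eta> + 8 / (h1 - 2 * \<eta>)) * L t * d powr (2 * \<gamma>)"
      using c0 Lt by (intro mult_nonneg_nonneg) auto
    then show ?thesis using True by simp
  next
    case False
    then have sp: "0 < s" using st by simp
    have "\<bar>H t - H s\<bar> \<le> D * d powr \<kappa>" using Hol[OF sp st(2)] by (simp add: d_def)
    then have "(H t - H s)\<^sup>2 \<le> (D * d powr \<kappa>)\<^sup>2"
      by (metis abs_ge_zero power2_abs power_mono)
    also have "\<dots> = D\<^sup>2 * d powr (2 * \<kappa>)"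
      by (simp add: power_mult_distrib power2_eq_square powr_add[symmetric])
    also have "\<dots> \<le> D\<^sup>2 * d powr (2 * \<gamma>)"
      using d \<gamma>_props by (intro mult_left_mono powr_mono') auto
    finally have HH: "(H t - H s)\<^sup>2 \<le> D\<^sup>2 * d powr (2 * \<gamma>)" .
    have s1: "s powr (2 * \<rho>) \<le> L t"
      unfolding L_def using st \<rho>_props h by (intro powr_mono2) auto
    have s2: "s powr h1 \<le> L t"
    proof -
      have "s powr h1 \<le> max 1 s powr (2 * \<rho>)" using st \<rho>_props h by (intro powr_le_max1) auto
      also have "\<dots> \<le> L t" unfolding L_def using st \<rho>_props h by (intro powr_mono2) auto
      finally show ?thesis .
    qed
    have B2: "4 * s powr (2 * \<rho>) / \<eta> + 8 * s powr h1 / (h1 - 2 * \<eta>) \<le> (4 / \<eta> + 8 / (h1 - 2 * \<eta>)) * L t"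
    proof -
      have q1: "4 * s powr (2 * \<rho>) / \<eta> \<le> 4 * L t / \<eta>" using s1 e by (intro divide_right_mono) auto
      have q2: "8 * s powr h1 / (h1 - 2 * \<eta>) \<le> 8 * L t / (h1 - 2 * \<eta>)"
        using s2 e h by (intro divide_right_mono) auto
      have "4 * s powr (2 * \<rho>) / \<eta> + 8 * s powr h1 / (h1 - 2 * \<eta>) \<le> 4 * L t / \<eta> + 8 * L t / (h1 - 2 * \<eta>)"
        using q1 q2 by (intro add_mono) auto
      also have "\<dots> = (4 / \<eta> + 8 / (h1 - 2 * \<eta>)) * L t"
        by (simp add: field_simps)
      finally show ?thesis .
    qed
    have "2 * ((H t - H s)\<^sup>2 / \<eta>\<^sup>2) * (4 * s powr (2 * \<rho>) / \<eta> + 8 * s powr h1 / (h1 - 2 * \<eta>))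
        \<le> 2 * ((D\<^sup>2 * d powr (2 * \<gamma>)) / \<eta>\<^sup>2) * ((4 / \<eta> + 8 / (h1 - 2 * \<eta>)) * L t)"
      using HH B2 e h by (intro mult_mono mult_left_mono divide_right_mono add_nonneg_nonneg) auto
    then show ?thesis by (simp add: field_simps)
  qed
  have "mbm_cov H t t + mbm_cov H s s - 2 * mbm_cov H t s
      \<le> (8 / \<eta> + 16 / h1) * d powr (2 * \<gamma>) + 2 * D\<^sup>2 / \<eta>\<^sup>2 * (4 / \<eta> + 8 / (h1 - 2 * \<eta>)) * L t * d powr (2 * \<gamma>)"
    using V_raw[OF st(1) st(2)] P1 P2 unfolding d_def by linarith
  also have "(8 / \<eta> + 16 / h1) * d powr (2 * \<gamma>) \<le> (8 / \<eta> + 16 / h1) * L t * d powr (2 * \<gamma>)"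
  proof -
    have k: "0 \<le> 8 / \<eta> + 16 / h1" using e h by (intro add_nonneg_nonneg) auto
    have "(8 / \<eta> + 16 / h1) * 1 \<le> (8 / \<eta> + 16 / h1) * L t" using Lt k by (rule mult_left_mono)
    then show ?thesis by (intro mult_right_mono) auto
  qed
  finally show ?thesis unfolding K0_def d_def by (simp add: algebra_simps)
qed

lemma V_big:
  assumes t: "0 \<le> t"
  shows "mbm_cov H t t \<le> K0 * L t"
proof -
  note e = \<eta>_pos \<eta>_le
  have "mbm_cov H t t + mbm_cov H 0 0 - 2 * mbm_cov H t 0
    \<le> 2 * (4 * (t - 0) powr (2 * (h2 + \<eta>)) / \<eta> + 8 * (t - 0) powr h1 / h1)
     + 2 * ((H t - H 0)\<^sup>2 / \<eta>\<^sup>2) * (4 * 0 powr (2 * \<rho>) / \<eta> + 8 * 0 powr h1 / (h1 - 2 * \<eta>))"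
    by (rule V_raw) (use t in auto)
  then have 1: "mbm_cov H t t \<le> 2 * (4 * t powr (2 * (h2 + \<eta>)) / \<eta> + 8 * t powr h1 / h1)"
    by (simp add: mbm_cov_0)
  have a1: "t powr (2 * (h2 + \<eta>)) \<le> L t" unfolding L_def \<rho>_def using t e h by (intro powr_le_max1) auto
  have a2: "t powr h1 \<le> L t" unfolding L_def using t \<rho>_props h by (intro powr_le_max1) auto
  have "2 * (4 * t powr (2 * (h2 + \<eta>)) / \<eta> + 8 * t powr h1 / h1) \<le> 2 * (4 * L t / \<eta> + 8 * L t / h1)"
    using a1 a2 e h by (intro mult_left_mono add_mono divide_right_mono) auto
  also have "\<dots> = (8 / \<eta> + 16 / h1) * L t" by (simp add: field_simps)
  also have "\<dots> \<le> K0 * L t"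
  proof -
    have "0 \<le> 2 * D\<^sup>2 / \<eta>\<^sup>2 * (4 / \<eta> + 8 / (h1 - 2 * \<eta>))"
      using e h by (intro mult_nonneg_nonneg add_nonneg_nonneg) auto
    then show ?thesis unfolding K0_def using L_ge1[of t] by (intro mult_right_mono) auto
  qed
  finally show ?thesis using 1 by linarith
qed

end

lemma chain_det:
  fixes f :: "real \<Rightarrow> real" and m :: real and b :: "nat \<Rightarrow> real"
  assumes inc: "\<And>n j. j < 2 ^ n \<Longrightarrow> \<bar>f (m + (real j + 1) / 2 ^ n) - f (m + real j / 2 ^ n)\<bar> \<le> b n"
  shows "j \<le> 2 ^ N \<Longrightarrow> \<bar>f (m + real j / 2 ^ N) - f m\<bar> \<le> (\<Sum>n\<le>N. b n)"
proof (induction N arbitrary: j)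
  case 0
  then have "j = 0 \<or> j = 1" by auto
  then show ?case
  proof
    assume "j = 0" then show ?thesis using inc[of 0 0] by simp
  next
    assume "j = 1" then show ?thesis using inc[of 0 0] by simp
  qed
next
  case (Suc N)
  have bnn: "0 \<le> b n" for n using inc[of 0 n] by (smt (verit) abs_ge_zero inc zero_less_numeral zero_less_power)
  have mono: "(\<Sum>n\<le>N. b n) \<le> (\<Sum>n\<le>Suc N. b n)" using bnn by simp
  obtain i where "j = 2 * i \<or> j = 2 * i + 1" by (metis oddE evenE)
  then show ?case
  proof
    assume j: "j = 2 * i"
    then have "i \<le> 2 ^ N" using Suc.prems by simp
    moreover have "real j / 2 ^ Suc N = real i / 2 ^ N" using j by (simp add: field_simps)
    ultimately show ?thesis using Suc.IH[of i] mono by simp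
  next
    assume j: "j = 2 * i + 1"
    then have i: "i < 2 ^ N" using Suc.prems by simp
    have e1: "real (2 * i) / 2 ^ Suc N = real i / 2 ^ N" by (simp add: field_simps)
    have e2: "real j = real (2 * i) + 1" using j by simp
    have "\<bar>f (m + real j / 2 ^ Suc N) - f (m + real (2 * i) / 2 ^ Suc N)\<bar> \<le> b (Suc N)"
      using inc[of "2 * i" "Suc N"] i unfolding e2 by simp
    then have "\<bar>f (m + real j / 2 ^ Suc N) - f (m + real i / 2 ^ N)\<bar> \<le> b (Suc N)" unfolding e1 .
    moreover have "\<bar>f (m + real i / 2 ^ N) - f m\<bar> \<le> (\<Sum>n\<le>N. b n)" using Suc.IH[of i] i by simp
    ultimately show ?thesis by simp
  qed
qed

lemma level_bound:
  fixes y \<gamma> :: real and n :: nat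
  assumes "0 \<le> y" "0 < \<gamma>" "2 \<le> y * \<gamma>"
  shows "2 ^ n * (sqrt 2 * exp (- y * 2 powr (\<gamma> * n))) \<le> sqrt 2 * exp (- y) * (1/2) ^ n"
proof -
  have "1 + \<gamma> * n * ln 2 \<le> exp (\<gamma> * n * ln 2)" by (rule exp_ge_add_one_self)
  also have "exp (\<gamma> * n * ln 2) = 2 powr (\<gamma> * n)" by (simp add: powr_def mult_ac)
  finally have a: "1 + \<gamma> * n * ln 2 \<le> 2 powr (\<gamma> * n)" .
  have "y + 2 * (real n * ln 2) \<le> y * (1 + \<gamma> * n * ln 2)"
  proof -
    have "2 * (real n * ln 2) \<le> (y * \<gamma>) * (n * ln 2)" using assms by (intro mult_right_mono) auto
    then show ?thesis by (simp add: algebra_simps)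
  qed
  also have "\<dots> \<le> y * 2 powr (\<gamma> * n)" using a assms by (intro mult_left_mono) auto
  finally have b: "exp (- y * 2 powr (\<gamma> * n)) \<le> exp (- y - (2 * (real n * ln 2)))" by simp
  have c: "exp (- y - (2 * (real n * ln 2))) = exp (- y) * (1/4) ^ n"
  proof -
    have "exp (- (2 * (real n * ln 2))) = (1/4) ^ n"
    proof -
      have l4: "ln (4::real) = 2 * ln 2" using ln_realpow[of 2 2] by simp
      have "exp (- (2 * (real n * ln 2))) = exp (ln (1/4) * n)" by (simp add: ln_div algebra_simps l4)
      also have "\<dots> = exp (ln (1/4)) ^ n" by (simp add: exp_of_nat2_mult)
      finally show ?thesis by simp
    qed
    then show ?thesis by (simp add: exp_diff exp_minus field_simps)
  qed
  have "2 ^ n * (sqrt 2 * exp (- y * 2 powr (\<gamma> * n))) \<le> 2 ^ n * (sqrt 2 * (exp (- y) * (1/4) ^ n))"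
    using b c by (intro mult_left_mono) auto
  also have "\<dots> = sqrt 2 * exp (- y) * ((2::real) ^ n * (1/4) ^ n)" by (simp add: algebra_simps)
  also have "(2::real) ^ n * (1/4) ^ n = (2 * (1/4)) ^ n" by (rule power_mult_distrib[symmetric])
  finally show ?thesis by simp
qed

context mbm_setup
begin

definition "rr = 2 powr (- \<gamma> / 2)"

definition Ech :: "real \<Rightarrow> real \<Rightarrow> nat \<Rightarrow> 'a set" where
  "Ech m c n = (\<Union>j\<in>{..<2 ^ n::nat}. {\<omega> \<in> space M. c * rr ^ n < \<bar>Y (m + (real j + 1) / 2 ^ n) \<omega> - Y (m + real j / 2 ^ n) \<omega>\<bar>})"

lemma prob: "prob_space M" using is_mbm_D(1)[OF Y] .

lemma Ymeas: "0 \<le> t \<Longrightarrow> Y t \<in> borel_measurable M" using is_mbm_D(2)[OF Y] .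

lemma Ech_sets: assumes "0 \<le> m" shows "Ech m c n \<in> sets M"
proof -
  have "{\<omega> \<in> space M. c * rr ^ n < \<bar>Y (m + (real j + 1) / 2 ^ n) \<omega> - Y (m + real j / 2 ^ n) \<omega>\<bar>} \<in> sets M" for j
  proof -
    have [measurable]: "Y (m + (real j + 1) / 2 ^ n) \<in> borel_measurable M" "Y (m + real j / 2 ^ n) \<in> borel_measurable M"
      using assms by (auto intro!: Ymeas)
    show ?thesis by measurable
  qed
  then show ?thesis unfolding Ech_def by blast
qed

lemma rr_pow: "(rr ^ n)\<^sup>2 = 2 powr (- \<gamma> * n)"
proof -
  have "(rr ^ n)\<^sup>2 = rr ^ (2 * n)" by (simp add: power_mult[symmetric] mult.commute)
  also have "\<dots> = 2 powr (real (2 * n) * (- \<gamma> / 2))" unfolding rr_def by (rule powr_power) simp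
  finally show ?thesis by (simp add: algebra_simps)
qed

lemma pair_tail:
  assumes m: "0 \<le> m" and c: "0 < c" and j: "j < (2::nat) ^ n"
  shows "measure M {\<omega> \<in> space M. c * rr ^ n < \<bar>Y (m + (real j + 1) / 2 ^ n) \<omega> - Y (m + real j / 2 ^ n) \<omega>\<bar>}
     \<le> sqrt 2 * exp (- (c\<^sup>2 / (4 * (K0 * L (m + 1)))) * 2 powr (\<gamma> * n))"
proof -
  define s where "s = m + real j / 2 ^ n"
  define t where "t = m + (real j + 1) / 2 ^ n"
  have jn: "real j + 1 \<le> 2 ^ n" using j
    by (metis Suc_leI of_nat_Suc of_nat_le_iff of_nat_numeral of_nat_power add.commute)
  have st: "0 \<le> s" "s \<le> t" "t - s \<le> 1" "t \<le> m + 1"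
    using m jn by (auto simp: s_def t_def field_simps)
  have ts: "t - s = 2 powr (- real n)"
  proof -
    have "t - s = 1 / 2 ^ n" by (simp add: s_def t_def field_simps)
    also have "\<dots> = 2 powr (- real n)" by (simp add: powr_minus powr_realpow divide_inverse)
    finally show ?thesis .
  qed
  define B where "B = K0 * L (m + 1) * 2 powr (- 2 * \<gamma> * n)"
  have Bpos: "0 < B" unfolding B_def using K0_pos L_ge1[of "m+1"] by simp
  have "mbm_cov H t t + mbm_cov H s s - 2 * mbm_cov H t s \<le> K0 * L t * (t - s) powr (2 * \<gamma>)"
    by (rule V_small[OF st(1-3)])
  also have "\<dots> \<le> B"
  proof -
    have "(t - s) powr (2 * \<gamma>) = 2 powr (- 2 * \<gamma> * n)" unfolding ts by (simp add: powr_powr algebra_simps)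
    moreover have "K0 * L t \<le> K0 * L (m + 1)" using K0_pos L_mono[OF st(4)] by simp
    ultimately show ?thesis unfolding B_def by (metis mult_right_mono powr_ge_zero)
  qed
  finally have V: "mbm_cov H t t + mbm_cov H s s - 2 * mbm_cov H t s \<le> B" .
  have T: "measure M {\<omega> \<in> space M. c * rr ^ n < \<bar>Y t \<omega> - Y s \<omega>\<bar>} \<le> sqrt 2 * exp (- (c * rr ^ n)\<^sup>2 / (4 * B))"
    by (rule tail_incr[OF Y st(1) _ V Bpos]) (use st c rr_def in auto)
  have E: "(c * rr ^ n)\<^sup>2 / (4 * B) = c\<^sup>2 / (4 * (K0 * L (m + 1))) * 2 powr (\<gamma> * n)"
  proof -
    have fr: "(cc * P) / (4 * (K * Q)) = cc / (4 * K) * (P / Q)" for cc P K Q :: real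
      by simp
    have "(c * rr ^ n)\<^sup>2 = c\<^sup>2 * 2 powr (- \<gamma> * n)" by (simp only: power_mult_distrib rr_pow)
    moreover have "2 powr (- \<gamma> * n) / 2 powr (- 2 * \<gamma> * n) = 2 powr (\<gamma> * n)"
      by (simp add: powr_diff[symmetric] algebra_simps)
    ultimately show ?thesis unfolding B_def by (simp only: fr)
  qed
  have "- (c * rr ^ n)\<^sup>2 / (4 * B) = - (c\<^sup>2 / (4 * (K0 * L (m + 1))) * 2 powr (\<gamma> * n))"
    unfolding E[symmetric] by (rule minus_divide_left[symmetric])
  then show ?thesis using T unfolding s_def t_def by (simp only: mult_minus_left)
qed

end

context mbm_setup
begin

lemma emeasure_Ech:
  assumes m: "0 \<le> m" and c: "0 < c" and y: "y = c\<^sup>2 / (4 * (K0 * L (m + 1)))" and yg: "2 \<le> y * \<gamma>"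
  shows "emeasure M (Ech m c n) \<le> ennreal (sqrt 2 * exp (- y) * (1/2) ^ n)"
proof -
  interpret prob_space M by (rule prob)
  let ?A = "\<lambda>j. {\<omega> \<in> space M. c * rr ^ n < \<bar>Y (m + (real j + 1) / 2 ^ n) \<omega> - Y (m + real j / 2 ^ n) \<omega>\<bar>}"
  have As: "?A j \<in> sets M" for j
  proof -
    have [measurable]: "Y (m + (real j + 1) / 2 ^ n) \<in> borel_measurable M" "Y (m + real j / 2 ^ n) \<in> borel_measurable M"
      using m by (auto intro!: Ymeas)
    show ?thesis by measurable
  qed
  have y0: "0 \<le> y" unfolding y using K0_pos L_ge1[of "m+1"] by simp
  have "emeasure M (Ech m c n) \<le> (\<Sum>j<2^n. emeasure M (?A j))"
    unfolding Ech_def by (rule emeasure_subadditive_finite) (use As in auto)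
  also have "\<dots> \<le> (\<Sum>j<(2::nat)^n. ennreal (sqrt 2 * exp (- y * 2 powr (\<gamma> * n))))"
  proof (intro sum_mono)
    fix j assume "j \<in> {..<(2::nat)^n}"
    then have j: "j < 2 ^ n" by simp
    show "emeasure M (?A j) \<le> ennreal (sqrt 2 * exp (- y * 2 powr (\<gamma> * n)))"
      unfolding emeasure_eq_measure using pair_tail[OF m c j] y by (intro ennreal_leI) simp
  qed
  also have "\<dots> = ennreal (2 ^ n * (sqrt 2 * exp (- y * 2 powr (\<gamma> * n))))"
    by (simp add: ennreal_of_nat_eq_real_of_nat ennreal_mult'[symmetric])
  also have "\<dots> \<le> ennreal (sqrt 2 * exp (- y) * (1/2) ^ n)"
    by (intro ennreal_leI level_bound y0 \<gamma>_props yg)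
  finally show ?thesis .
qed

lemma block_chain:
  assumes m: "0 \<le> m" and c: "0 < c" and y: "y = c\<^sup>2 / (4 * (K0 * L (m + 1)))" and yg: "2 \<le> y * \<gamma>"
  shows "emeasure M (\<Union>n. Ech m c n) \<le> ennreal (2 * sqrt 2 * exp (- y))"
proof -
  have "emeasure M (\<Union>n. Ech m c n) \<le> (\<Sum>n. emeasure M (Ech m c n))"
    by (rule emeasure_subadditive_countably) (use Ech_sets[OF m] in auto)
  also have "\<dots> \<le> (\<Sum>n. ennreal (sqrt 2 * exp (- y) * (1/2) ^ n))"
    by (intro suminf_le emeasure_Ech[OF m c y yg]) auto
  also have "\<dots> = ennreal (\<Sum>n. sqrt 2 * exp (- y) * (1/2) ^ n)"
    by (rule suminf_ennreal2) (auto intro!: summable_mult summable_geometric)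
  also have "(\<Sum>n. sqrt 2 * exp (- y) * (1/2::real) ^ n) = sqrt 2 * exp (- y) * 2"
    by (subst suminf_mult) (auto simp: suminf_geometric)
  finally show ?thesis by (simp add: mult_ac)
qed

end

context mbm_setup
begin

definition "S0 = 1 / (1 - rr)"
definition "W (m::nat) = max (real m powr (h2 + \<delta>)) 1"

lemma rr_props: "0 < rr" "rr < 1"
  unfolding rr_def using \<gamma>_props powr_less_mono[of "- \<gamma> / 2" 0 2] by auto

lemma S0_ge1: "1 \<le> S0"
  unfolding S0_def using rr_props by (simp add: field_simps)

lemma W_ge1: "1 \<le> W m" unfolding W_def by simp

definition "Fblk m u = {\<omega> \<in> space M. u * W m / 2 < \<bar>Y (real m) \<omega>\<bar>} \<union> (\<Union>n. Ech (real m) (u * W m / (2 * S0)) n)"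

lemma Fblk_sets: "Fblk m u \<in> sets M"
proof -
  have [measurable]: "Y (real m) \<in> borel_measurable M" by (rule Ymeas) simp
  have "{\<omega> \<in> space M. u * W m / 2 < \<bar>Y (real m) \<omega>\<bar>} \<in> sets M" by measurable
  moreover have "(\<Union>n. Ech (real m) (u * W m / (2 * S0)) n) \<in> sets M"
    using Ech_sets[of "real m"] by auto
  ultimately show ?thesis unfolding Fblk_def by auto
qed

lemma geom_partial: "0 \<le> c \<Longrightarrow> (\<Sum>n\<le>N. c * rr ^ n) \<le> c * S0"
proof -
  assume c: "0 \<le> c"
  have "(\<Sum>n\<le>N. rr ^ n) \<le> (\<Sum>n. rr ^ n)"
    using rr_props by (intro sum_le_suminf summable_geometric) auto
  also have "\<dots> = S0" unfolding S0_def using rr_props by (simp add: suminf_geometric)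
  finally show ?thesis using c by (simp add: sum_distrib_left[symmetric] mult_left_mono)
qed

lemma blk_good:
  assumes \<omega>: "\<omega> \<in> space M" "\<omega> \<notin> Fblk m u" and u: "0 < u" and j: "j \<le> 2 ^ N"
  shows "\<bar>Y (real m + real j / 2 ^ N) \<omega>\<bar> \<le> u * W m"
proof -
  define c where "c = u * W m / (2 * S0)"
  have c0: "0 \<le> c" unfolding c_def using u W_ge1[of m] S0_ge1 by simp
  have anc: "\<bar>Y (real m) \<omega>\<bar> \<le> u * W m / 2" using \<omega> unfolding Fblk_def by auto
  have inc: "\<bar>Y (real m + (real j' + 1) / 2 ^ n) \<omega> - Y (real m + real j' / 2 ^ n) \<omega>\<bar> \<le> c * rr ^ n"
    if "j' < 2 ^ n" for n j'
    using \<omega> that unfolding Fblk_def Ech_def c_def by (auto simp: not_less)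
  have "\<bar>(\<lambda>t. Y t \<omega>) (real m + real j / 2 ^ N) - (\<lambda>t. Y t \<omega>) (real m)\<bar> \<le> (\<Sum>n\<le>N. c * rr ^ n)"
    by (rule chain_det[where f="\<lambda>t. Y t \<omega>", OF inc j]) auto
  also have "\<dots> \<le> c * S0" by (rule geom_partial[OF c0])
  also have "c * S0 = u * W m / 2" unfolding c_def using S0_ge1 by simp
  finally have "\<bar>Y (real m + real j / 2 ^ N) \<omega> - Y (real m) \<omega>\<bar> \<le> u * W m / 2" by simp
  then show ?thesis using anc by linarith
qed

lemma blk_prob:
  assumes u: "0 < u" and z: "z = u\<^sup>2 * ((W m)\<^sup>2 / L (real m + 1)) / (16 * S0\<^sup>2 * K0)" and zg: "2 \<le> z * \<gamma>"
  shows "emeasure M (Fblk m u) \<le> ennreal (3 * sqrt 2 * exp (- z))"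
proof -
  interpret prob_space M by (rule prob)
  have [measurable]: "Y (real m) \<in> borel_measurable M" by (rule Ymeas) simp
  have K0p: "0 < K0" by (rule K0_pos)
  have Lm: "1 \<le> L (real m)" "L (real m) \<le> L (real m + 1)" "1 \<le> L (real m + 1)"
    using L_ge1 L_mono by auto
  have W1: "1 \<le> W m" by (rule W_ge1)
  have S1: "1 \<le> S0" by (rule S0_ge1)
  have "measure M {\<omega> \<in> space M. u * W m / 2 < \<bar>Y (real m) \<omega>\<bar>} \<le> sqrt 2 * exp (- (u * W m / 2)\<^sup>2 / (4 * (K0 * L (real m))))"
    by (rule tail_single[OF Y _ V_big]) (use u W1 K0p Lm in auto)
  also have "\<dots> \<le> sqrt 2 * exp (- z)"
  proof -
    have "z \<le> (u * W m / 2)\<^sup>2 / (4 * (K0 * L (real m)))"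
    proof -
      have "z = (u * W m)\<^sup>2 / (16 * (S0\<^sup>2 * K0 * L (real m + 1)))"
        unfolding z by (simp add: power_mult_distrib field_simps)
      also have "\<dots> \<le> (u * W m)\<^sup>2 / (16 * (1 * K0 * L (real m)))"
      proof (intro divide_left_mono mult_left_mono mult_mono)
        show "1 \<le> S0\<^sup>2" using S1 by (simp add: one_le_power)
      qed (use K0p Lm S1 in auto)
      also have "\<dots> = (u * W m / 2)\<^sup>2 / (4 * (K0 * L (real m)))"
        by (simp add: power_mult_distrib field_simps)
      finally show ?thesis .
    qed
    then show ?thesis by simp
  qed
  finally have A: "emeasure M {\<omega> \<in> space M. u * W m / 2 < \<bar>Y (real m) \<omega>\<bar>} \<le> ennreal (sqrt 2 * exp (- z))"
    unfolding emeasure_eq_measure by (rule ennreal_leI)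
  have yz: "z = (u * W m / (2 * S0))\<^sup>2 / (4 * (K0 * L (real m + 1)))"
    unfolding z by (simp add: power_mult_distrib field_simps)
  have B: "emeasure M (\<Union>n. Ech (real m) (u * W m / (2 * S0)) n) \<le> ennreal (2 * sqrt 2 * exp (- z))"
    by (rule block_chain[OF _ _ yz zg]) (use u W1 S1 in auto)
  have "emeasure M (Fblk m u) \<le> emeasure M {\<omega> \<in> space M. u * W m / 2 < \<bar>Y (real m) \<omega>\<bar>}
      + emeasure M (\<Union>n. Ech (real m) (u * W m / (2 * S0)) n)"
    unfolding Fblk_def by (rule emeasure_subadditive) (use Ech_sets[of "real m"] in auto)
  also have "\<dots> \<le> ennreal (sqrt 2 * exp (- z)) + ennreal (2 * sqrt 2 * exp (- z))"
    by (intro add_mono A B)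
  also have "\<dots> = ennreal (3 * sqrt 2 * exp (- z))"
    by (subst ennreal_plus[symmetric]) (auto simp: algebra_simps)
  finally show ?thesis .
qed

end

context mbm_setup
begin

definition "\<beta> = h2 + \<delta> - \<rho>"
definition "Zs = (\<Sum>m. inverse (real (Suc m) ^ 2))"

lemma \<beta>_pos: "0 < \<beta>" unfolding \<beta>_def using \<rho>_props by simp

lemma summable_Zs: "summable (\<lambda>m. inverse (real (Suc m) ^ 2))"
proof -
  have "summable (\<lambda>n. inverse (of_nat n ^ 2 :: real))" by (rule inverse_power_summable) simp
  then show ?thesis by (subst summable_Suc_iff[where f="\<lambda>n. inverse (of_nat n ^ 2 :: real)"])
qed

lemma Q_bound: "max 1 (real m) powr (2 * \<beta>) / 4 \<le> (W m)\<^sup>2 / L (real m + 1)"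
proof (cases "m = 0")
  case True
  then show ?thesis by (simp add: W_def L_def)
next
  case False
  then have m1: "1 \<le> real m" by simp
  have Wm: "W m = real m powr (h2 + \<delta>)"
    unfolding W_def using m1 h \<delta> by (intro max_absorb1 ge_one_powr_ge_zero) auto
  have W2: "(W m)\<^sup>2 = real m powr (2 * (h2 + \<delta>))"
    unfolding Wm by (simp add: power2_eq_square powr_add[symmetric])
  have "L (real m + 1) = (real m + 1) powr (2 * \<rho>)" unfolding L_def using m1 by simp
  also have "\<dots> \<le> (2 * real m) powr (2 * \<rho>)" using m1 \<rho>_props h by (intro powr_mono2) auto
  also have "\<dots> = 2 powr (2 * \<rho>) * real m powr (2 * \<rho>)" by (rule powr_mult)
  also have "2 powr (2 * \<rho>) \<le> 2 powr 2" using \<rho>_props by (intro powr_mono) auto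
  then have "2 powr (2 * \<rho>) * real m powr (2 * \<rho>) \<le> 4 * real m powr (2 * \<rho>)"
    by (intro mult_right_mono) auto
  finally have Lb: "L (real m + 1) \<le> 4 * real m powr (2 * \<rho>)" .
  have mp: "0 < real m powr (2 * \<rho>)" using m1 by simp
  have "max 1 (real m) powr (2 * \<beta>) / 4 = real m powr (2 * (h2 + \<delta>)) / (4 * real m powr (2 * \<rho>))"
    using m1 mp by (simp add: max_absorb2 \<beta>_def powr_diff[symmetric] algebra_simps)
  also have "\<dots> \<le> (W m)\<^sup>2 / L (real m + 1)"
    unfolding W2 using Lb L_ge1[of "real m + 1"] mp by (intro divide_left_mono) auto
  finally show ?thesis .
qed

lemma exp_sum_term:
  assumes v: "0 \<le> v" "1 \<le> \<beta> * v" and z: "v * max 1 (real m) powr (2 * \<beta>) \<le> z"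
  shows "exp (- z) \<le> exp (- v) * (4 * inverse (real (Suc m) ^ 2))"
proof -
  define Mx where "Mx = max 1 (real m)"
  have M1: "1 \<le> Mx" unfolding Mx_def by simp
  have "1 + 2 * \<beta> * ln Mx \<le> exp (2 * \<beta> * ln Mx)" by (rule exp_ge_add_one_self)
  also have "\<dots> = Mx powr (2 * \<beta>)" using M1 by (simp add: powr_def mult_ac)
  finally have a: "1 + 2 * \<beta> * ln Mx \<le> Mx powr (2 * \<beta>)" .
  have lnM: "0 \<le> ln Mx" using M1 by simp
  have "v + 2 * ln Mx \<le> v * (1 + 2 * \<beta> * ln Mx)"
  proof -
    have "2 * ln Mx \<le> 2 * (\<beta> * v) * ln Mx" using v lnM by (intro mult_right_mono) auto
    then show ?thesis by (simp add: algebra_simps)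
  qed
  also have "\<dots> \<le> v * Mx powr (2 * \<beta>)" using a v by (intro mult_left_mono) auto
  also have "\<dots> \<le> z" using z unfolding Mx_def .
  finally have "exp (- z) \<le> exp (- v - 2 * ln Mx)" by simp
  also have "exp (- v - 2 * ln Mx) = exp (- v) * inverse (Mx ^ 2)"
  proof -
    have Mp: "0 < Mx" using M1 by simp
    have "exp (2 * ln Mx) = exp (ln Mx + ln Mx)" by (simp only: mult_2)
    also have "\<dots> = Mx * Mx" by (simp only: exp_add exp_ln[OF Mp])
    finally have "exp (2 * ln Mx) = Mx ^ 2" by (simp only: power2_eq_square)
    then show ?thesis by (simp add: exp_diff divide_inverse)
  qed
  also have "inverse (Mx ^ 2) \<le> 4 * inverse (real (Suc m) ^ 2)"
  proof -
    have "real (Suc m) \<le> 2 * Mx" unfolding Mx_def by simp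
    then have "real (Suc m) ^ 2 \<le> (2 * Mx) ^ 2" by (intro power_mono) auto
    then have "inverse ((2 * Mx) ^ 2) \<le> inverse (real (Suc m) ^ 2)"
      by (intro le_imp_inverse_le) auto
    then show ?thesis using M1 by (simp add: power_mult_distrib field_simps)
  qed
  then have "exp (- v) * inverse (Mx ^ 2) \<le> exp (- v) * (4 * inverse (real (Suc m) ^ 2))"
    by (intro mult_left_mono) auto
  finally show ?thesis .
qed

lemma fail_bound:
  assumes u: "0 < u" and v: "v = u\<^sup>2 / (64 * S0\<^sup>2 * K0)" and vg: "2 \<le> v * \<gamma>" and vb: "1 \<le> \<beta> * v"
  shows "emeasure M (\<Union>m. Fblk m u) \<le> ennreal (12 * sqrt 2 * Zs * exp (- v))"
proof -
  have K0p: "0 < K0" by (rule K0_pos)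
  have v0: "0 \<le> v" unfolding v using K0p by simp
  define z where "z m = u\<^sup>2 * ((W m)\<^sup>2 / L (real m + 1)) / (16 * S0\<^sup>2 * K0)" for m
  have zv: "v * max 1 (real m) powr (2 * \<beta>) \<le> z m" for m
  proof -
    have "v * max 1 (real m) powr (2 * \<beta>) = u\<^sup>2 * (max 1 (real m) powr (2 * \<beta>) / 4) / (16 * S0\<^sup>2 * K0)"
      unfolding v by (simp add: field_simps)
    also have "\<dots> \<le> z m" unfolding z_def using Q_bound[of m] K0p
      by (intro divide_right_mono mult_left_mono) auto
    finally show ?thesis .
  qed
  have zg: "2 \<le> z m * \<gamma>" for m
  proof -
    have "1 \<le> max 1 (real m) powr (2 * \<beta>)" using \<beta>_pos by (intro ge_one_powr_ge_zero) auto
    then have "v \<le> v * max 1 (real m) powr (2 * \<beta>)" using v0 by (simp add: mult_le_cancel_left1)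
    then have "v \<le> z m" using zv[of m] by linarith
    then show ?thesis using vg \<gamma>_props by (smt (verit) mult_right_mono)
  qed
  have "emeasure M (\<Union>m. Fblk m u) \<le> (\<Sum>m. emeasure M (Fblk m u))"
    by (rule emeasure_subadditive_countably) (use Fblk_sets in auto)
  also have "\<dots> \<le> (\<Sum>m. ennreal (3 * sqrt 2 * exp (- v) * (4 * inverse (real (Suc m) ^ 2))))"
  proof (intro suminf_le)
    fix m
    have "emeasure M (Fblk m u) \<le> ennreal (3 * sqrt 2 * exp (- z m))"
      by (rule blk_prob[OF u z_def zg])
    also have "\<dots> \<le> ennreal (3 * sqrt 2 * exp (- v) * (4 * inverse (real (Suc m) ^ 2)))"
      using exp_sum_term[OF v0 vb zv[of m]] by (intro ennreal_leI) (simp add: mult_ac)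
    finally show "emeasure M (Fblk m u) \<le> ennreal (3 * sqrt 2 * exp (- v) * (4 * inverse (real (Suc m) ^ 2)))" .
  qed auto
  also have "\<dots> = ennreal (\<Sum>m. 3 * sqrt 2 * exp (- v) * (4 * inverse (real (Suc m) ^ 2)))"
    by (rule suminf_ennreal2, simp, intro summable_mult summable_Zs)
  also have "(\<Sum>m. 3 * sqrt 2 * exp (- v) * (4 * inverse (real (Suc m) ^ 2))) = 12 * sqrt 2 * Zs * exp (- v)"
  proof -
    have "(\<Sum>m. 3 * sqrt 2 * exp (- v) * (4 * inverse (real (Suc m) ^ 2))) = 3 * sqrt 2 * exp (- v) * (\<Sum>m. 4 * inverse (real (Suc m) ^ 2))"
      by (rule suminf_mult) (intro summable_mult summable_Zs)
    also have "(\<Sum>m. 4 * inverse (real (Suc m) ^ 2)) = 4 * Zs"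
      unfolding Zs_def by (rule suminf_mult) (rule summable_Zs)
    finally show ?thesis by simp
  qed
  finally show ?thesis .
qed

end

context mbm_setup
begin

definition "wt t = max (t powr (h2 + \<delta>)) 1"
definition "dy (p :: nat \<times> nat) = real (snd p) / 2 ^ fst p"
definition "Sp \<omega> = (SUP p. ereal (\<bar>Y (dy p) \<omega>\<bar> / wt (dy p)))"

lemma wt_ge1: "1 \<le> wt t" unfolding wt_def by simp

lemma dy_nonneg: "0 \<le> dy p" unfolding dy_def by simp

lemma Sp_meas: "Sp \<in> borel_measurable M"
proof -
  have [measurable]: "Y (dy p) \<in> borel_measurable M" for p using Ymeas dy_nonneg by auto
  show ?thesis unfolding Sp_def by measurable
qed

lemma Sp_nonneg: "0 \<le> Sp \<omega>"
proof -
  have "0 \<le> \<bar>Y (dy (0, 0)) \<omega>\<bar> / wt (dy (0, 0))"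
    using wt_ge1[of "dy (0, 0)"] by (intro divide_nonneg_pos) auto
  then have "ereal 0 \<le> ereal (\<bar>Y (dy (0, 0)) \<omega>\<bar> / wt (dy (0, 0)))" by simp
  also have "\<dots> \<le> Sp \<omega>" unfolding Sp_def by (rule SUP_upper) simp
  finally show ?thesis by (simp add: zero_ereal_def)
qed

lemma W_le_wt: "real m \<le> t \<Longrightarrow> W m \<le> wt t"
proof -
  assume mt: "real m \<le> t"
  have "real m powr (h2 + \<delta>) \<le> t powr (h2 + \<delta>)" by (rule powr_mono2) (use h \<delta> mt in auto)
  then show ?thesis unfolding W_def wt_def by (auto simp: max_def)
qed

lemma Sp_subset:
  assumes u: "0 < u"
  shows "{\<omega> \<in> space M. ereal u < Sp \<omega>} \<subseteq> (\<Union>m. Fblk m u)"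
proof
  fix \<omega> assume \<omega>: "\<omega> \<in> {\<omega> \<in> space M. ereal u < Sp \<omega>}"
  then obtain p where p: "ereal u < ereal (\<bar>Y (dy p) \<omega>\<bar> / wt (dy p))"
    unfolding Sp_def by (auto simp: less_SUP_iff)
  obtain N k where pk: "p = (N, k)" by (cases p)
  define m where "m = k div 2 ^ N"
  define j where "j = k mod 2 ^ N"
  have kk: "k = m * 2 ^ N + j" unfolding m_def j_def using div_mult_mod_eq[of k "2 ^ N"] by simp
  have jle: "j \<le> 2 ^ N" unfolding j_def
    by (meson less_imp_le_nat mod_less_divisor zero_less_numeral zero_less_power)
  have dyp: "dy p = real m + real j / 2 ^ N"
    unfolding dy_def pk by (simp add: kk field_simps)
  have mt: "real m \<le> dy p" unfolding dyp by simp
  show "\<omega> \<in> (\<Union>m. Fblk m u)"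
  proof (rule ccontr)
    assume "\<omega> \<notin> (\<Union>m. Fblk m u)"
    then have "\<omega> \<notin> Fblk m u" by auto
    then have "\<bar>Y (dy p) \<omega>\<bar> \<le> u * W m" unfolding dyp using \<omega> u jle by (intro blk_good) auto
    also have "\<dots> \<le> u * wt (dy p)" using W_le_wt[OF mt] u by simp
    finally have "\<bar>Y (dy p) \<omega>\<bar> / wt (dy p) \<le> u" using wt_ge1[of "dy p"]
      by (simp add: divide_le_eq)
    then show False using p by simp
  qed
qed

definition "c2 = 1 / (64 * S0\<^sup>2 * K0)"
definition "v0 = max (2 / \<gamma>) (1 / \<beta>)"
definition "C1 = max (12 * sqrt 2 * Zs) (exp v0)"

lemma c2_pos: "0 < c2" unfolding c2_def using K0_pos S0_ge1 by simp
lemma C1_pos: "0 < C1" unfolding C1_def by (auto simp: less_max_iff_disj)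

lemma tail_Sup:
  assumes u: "0 < u"
  shows "emeasure M {\<omega> \<in> space M. ereal u < Sp \<omega>} \<le> ennreal (C1 * exp (- c2 * u\<^sup>2))"
proof -
  interpret prob_space M by (rule prob)
  have [measurable]: "Sp \<in> borel_measurable M" by (rule Sp_meas)
  show ?thesis
  proof (cases "v0 \<le> c2 * u\<^sup>2")
    case True
    define v where "v = u\<^sup>2 / (64 * S0\<^sup>2 * K0)"
    have vc: "v = c2 * u\<^sup>2" unfolding v_def c2_def by simp
    have vg: "2 \<le> v * \<gamma>"
    proof -
      have "2 / \<gamma> \<le> v" using True vc unfolding v0_def by simp
      then show ?thesis using \<gamma>_props by (simp add: field_simps)
    qed
    have vb: "1 \<le> \<beta> * v"
    proof -
      have "1 / \<beta> \<le> v" using True vc unfolding v0_def by simp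
      then show ?thesis using \<beta>_pos by (simp add: field_simps)
    qed
    have "emeasure M {\<omega> \<in> space M. ereal u < Sp \<omega>} \<le> emeasure M (\<Union>m. Fblk m u)"
      by (rule emeasure_mono[OF Sp_subset[OF u]]) (use Fblk_sets in auto)
    also have "\<dots> \<le> ennreal (12 * sqrt 2 * Zs * exp (- v))"
      by (rule fail_bound[OF u v_def vg vb])
    also have "\<dots> \<le> ennreal (C1 * exp (- c2 * u\<^sup>2))"
      unfolding vc C1_def by (intro ennreal_leI mult_right_mono) auto
    finally show ?thesis .
  next
    case False
    have "emeasure M {\<omega> \<in> space M. ereal u < Sp \<omega>} \<le> 1"
      by (rule emeasure_le_1)
    also have "1 \<le> ennreal (C1 * exp (- c2 * u\<^sup>2))"
    proof -
      have "exp v0 * exp (- c2 * u\<^sup>2) \<le> C1 * exp (- c2 * u\<^sup>2)" unfolding C1_def by (intro mult_right_mono) auto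
      moreover have "1 \<le> exp v0 * exp (- c2 * u\<^sup>2)" using False by (simp add: exp_add[symmetric])
      ultimately have "1 \<le> C1 * exp (- c2 * u\<^sup>2)" by linarith
      then show ?thesis by (simp add: ennreal_leI del: mult_minus_left)
    qed
    finally show ?thesis .
  qed
qed

end

context mbm_setup
begin

lemma dyadic_approx:
  assumes t: "0 < t"
  shows "(\<lambda>N. dy (N, nat \<lfloor>t * 2 ^ N\<rfloor>)) \<longlonglongrightarrow> t"
proof (rule tendsto_sandwich[where f="\<lambda>N. t - inverse (2 ^ N)" and h="\<lambda>N. t"])
  have fl: "dy (N, nat \<lfloor>t * 2 ^ N\<rfloor>) = of_int \<lfloor>t * 2 ^ N\<rfloor> / 2 ^ N" for N :: nat
    using t by (simp add: of_nat_nat dy_def)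
  show "\<forall>\<^sub>F N in sequentially. t - inverse (2 ^ N) \<le> dy (N, nat \<lfloor>t * 2 ^ N\<rfloor>)"
  proof (intro always_eventually allI)
    fix N :: nat
    have a: "t * 2 ^ N - 1 \<le> of_int \<lfloor>t * 2 ^ N\<rfloor>" by linarith
    have "t - inverse (2 ^ N) = (t * 2 ^ N - 1) / 2 ^ N" by (simp add: field_simps)
    also have "\<dots> \<le> of_int \<lfloor>t * 2 ^ N\<rfloor> / 2 ^ N" using a by (intro divide_right_mono) auto
    finally show "t - inverse (2 ^ N) \<le> dy (N, nat \<lfloor>t * 2 ^ N\<rfloor>)"
      unfolding fl .
  qed
  show "\<forall>\<^sub>F N in sequentially. dy (N, nat \<lfloor>t * 2 ^ N\<rfloor>) \<le> t"
  proof (intro always_eventually allI)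
    fix N :: nat
    have "of_int \<lfloor>t * 2 ^ N\<rfloor> \<le> t * 2 ^ N" by linarith
    then show "dy (N, nat \<lfloor>t * 2 ^ N\<rfloor>) \<le> t"
      unfolding fl by (simp add: field_simps)
  qed
  have "(\<lambda>N. inverse ((2::real) ^ N)) \<longlonglongrightarrow> 0" by (rule LIMSEQ_inverse_realpow_zero) simp
  then show "(\<lambda>N. t - inverse ((2::real) ^ N)) \<longlonglongrightarrow> t"
    using tendsto_diff[OF tendsto_const, of _ 0 sequentially t] by simp
qed simp

lemma wt_cont: "continuous_on {0..} wt"
  unfolding wt_def[abs_def] using h \<delta>
  by (intro continuous_on_max continuous_on_const continuous_on_powr' continuous_on_id) auto

lemma pointwise_bound:
  assumes fin: "Sp \<omega> \<noteq> \<infinity>" and cont: "continuous_on {0..} (\<lambda>t. Y t \<omega>)" and t: "0 < t"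
  shows "\<bar>Y t \<omega>\<bar> \<le> max (t powr (h2 + \<delta>)) 1 * real_of_ereal (Sp \<omega>)"
proof -
  define x where "x = real_of_ereal (Sp \<omega>)"
  have Sx: "Sp \<omega> = ereal x" unfolding x_def using fin Sp_nonneg[of \<omega>]
    by (cases "Sp \<omega>") auto
  have bd: "\<bar>Y (dy p) \<omega>\<bar> \<le> wt (dy p) * x" for p
  proof -
    have "ereal (\<bar>Y (dy p) \<omega>\<bar> / wt (dy p)) \<le> Sp \<omega>" unfolding Sp_def by (rule SUP_upper) simp
    then have "\<bar>Y (dy p) \<omega>\<bar> / wt (dy p) \<le> x" using Sx by simp
    then show ?thesis using wt_ge1[of "dy p"] by (simp add: divide_le_eq mult.commute)
  qed
  define tN where "tN N = dy (N, nat \<lfloor>t * 2 ^ N\<rfloor>)" for N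
  have tN: "tN \<longlonglongrightarrow> t" unfolding tN_def by (rule dyadic_approx[OF t])
  have tN0: "tN N \<in> {0..}" for N unfolding tN_def using dy_nonneg by simp
  have l1: "(\<lambda>N. \<bar>Y (tN N) \<omega>\<bar>) \<longlonglongrightarrow> \<bar>Y t \<omega>\<bar>"
    by (intro tendsto_rabs continuous_on_tendsto_compose[OF cont tN]) (use t tN0 in auto)
  have l2: "(\<lambda>N. wt (tN N) * x) \<longlonglongrightarrow> wt t * x"
    by (intro tendsto_mult_right continuous_on_tendsto_compose[OF wt_cont tN]) (use t tN0 in auto)
  have "\<bar>Y t \<omega>\<bar> \<le> wt t * x"
    by (rule tendsto_le[OF trivial_limit_sequentially l2 l1]) (use bd tN_def in auto)
  then show ?thesis unfolding wt_def x_def .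
qed

lemma main_result:
  "\<exists>\<xi>. \<xi> \<in> borel_measurable M \<and> (\<forall>\<omega>\<in>space M. 0 \<le> \<xi> \<omega>) \<and>
           (AE \<omega> in M. \<forall>t>0. \<bar>Y t \<omega>\<bar> \<le> max (t powr (h2 + \<delta>)) 1 * \<xi> \<omega>) \<and>
           (\<exists>C1>0. \<exists>C2>0. \<forall>u>0.
              measure M {\<omega>\<in>space M. \<xi> \<omega> > u} \<le> C1 * exp (- C2 * u\<^sup>2))"
proof -
  interpret prob_space M by (rule prob)
  have [measurable]: "Sp \<in> borel_measurable M" by (rule Sp_meas)
  define \<xi> where "\<xi> \<omega> = real_of_ereal (Sp \<omega>)" for \<omega>
  have m: "\<xi> \<in> borel_measurable M" unfolding \<xi>_def[abs_def] by measurable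
  have nn: "\<forall>\<omega>\<in>space M. 0 \<le> \<xi> \<omega>" unfolding \<xi>_def using Sp_nonneg by (auto intro: real_of_ereal_pos)
  have tl: "measure M {\<omega>\<in>space M. \<xi> \<omega> > u} \<le> C1 * exp (- c2 * u\<^sup>2)" if u: "0 < u" for u
  proof -
    have sub: "{\<omega>\<in>space M. \<xi> \<omega> > u} \<subseteq> {\<omega> \<in> space M. ereal u < Sp \<omega>}"
    proof safe
      fix \<omega> assume "\<omega> \<in> space M" "u < \<xi> \<omega>"
      then show "ereal u < Sp \<omega>" using u Sp_nonneg[of \<omega>] unfolding \<xi>_def
        by (cases "Sp \<omega>") auto
    qed
    have "measure M {\<omega>\<in>space M. \<xi> \<omega> > u} \<le> measure M {\<omega> \<in> space M. ereal u < Sp \<omega>}"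
      by (rule finite_measure_mono[OF sub]) measurable
    also have "\<dots> \<le> C1 * exp (- c2 * u\<^sup>2)"
      using tail_Sup[OF u] C1_pos unfolding measure_def by (intro enn2real_leI) auto
    finally show ?thesis .
  qed
  have null: "{\<omega> \<in> space M. Sp \<omega> = \<infinity>} \<in> null_sets M"
  proof -
    let ?N = "{\<omega> \<in> space M. Sp \<omega> = \<infinity>}"
    have Ns: "?N \<in> sets M" by measurable
    have bN: "measure M ?N \<le> C1 * exp (- c2) ^ n" for n :: nat
    proof -
      have "?N \<subseteq> {\<omega> \<in> space M. ereal (real (Suc n)) < Sp \<omega>}" by auto
      then have "measure M ?N \<le> measure M {\<omega> \<in> space M. ereal (real (Suc n)) < Sp \<omega>}"
        by (intro finite_measure_mono) measurable
      also have "\<dots> \<le> C1 * exp (- c2 * (real (Suc n))\<^sup>2)"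
        using tail_Sup[of "real (Suc n)"] C1_pos unfolding measure_def by (intro enn2real_leI) auto
      also have "\<dots> \<le> C1 * exp (- c2) ^ n"
      proof -
        have "real n \<le> real (Suc n) * 1" by simp
        also have "\<dots> \<le> real (Suc n) * real (Suc n)" by (intro mult_left_mono) auto
        finally have "real n \<le> (real (Suc n))\<^sup>2" by (simp only: power2_eq_square)
        then have "- c2 * (real (Suc n))\<^sup>2 \<le> real n * (- c2)" using c2_pos by (simp add: mult_left_mono)
        then have "exp (- c2 * (real (Suc n))\<^sup>2) \<le> exp (real n * (- c2))" by simp
        also have "\<dots> = exp (- c2) ^ n" by (rule exp_of_nat_mult)
        finally show ?thesis using C1_pos by simp
      qed
      finally show ?thesis .
    qed
    have lim: "(\<lambda>n. C1 * exp (- c2) ^ n) \<longlonglongrightarrow> 0"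
      using c2_pos by (intro tendsto_mult_right_zero LIMSEQ_power_zero) simp
    have "measure M ?N \<le> 0"
      by (rule tendsto_le[OF trivial_limit_sequentially lim tendsto_const]) (use bN in auto)
    then have "measure M ?N = 0" by (simp add: antisym)
    then show ?thesis using Ns by (simp add: emeasure_eq_measure null_sets_def)
  qed
  have ae1: "AE \<omega> in M. Sp \<omega> \<noteq> \<infinity>"
    by (rule AE_I'[OF null]) auto
  have ae2: "AE \<omega> in M. continuous_on {0..} (\<lambda>t. Y t \<omega>)" by (rule is_mbm_D(4)[OF Y])
  have ae: "AE \<omega> in M. \<forall>t>0. \<bar>Y t \<omega>\<bar> \<le> max (t powr (h2 + \<delta>)) 1 * \<xi> \<omega>"
    using ae1 ae2 by eventually_elim (auto simp: \<xi>_def intro: pointwise_bound)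
  show ?thesis
    using m nn ae tl C1_pos c2_pos by blast
qed

end

theorem theorem6:
  fixes H :: "real \<Rightarrow> real" and M :: "'a measure" and Y :: "real \<Rightarrow> 'a \<Rightarrow> real"
    and h1 h2 D \<kappa> :: real
  assumes H_cont: "continuous_on {0..} H"
    and H_range: "\<forall>t\<ge>0. 0 < H t \<and> H t < 1"
    and H1: "0 < h1" "h1 < h2" "h2 < 1" "\<forall>t\<ge>0. h1 \<le> H t \<and> H t \<le> h2"
    and H2: "D > 0" "0 < \<kappa>" "\<kappa> \<le> 1"
            "\<forall>s t. 0 < s \<and> s \<le> t \<longrightarrow> \<bar>H t - H s\<bar> \<le> D * (t - s) powr \<kappa>"
    and Y: "is_mbm M H Y"
  shows "\<forall>\<delta>>0. \<exists>\<xi>. \<xi> \<in> borel_measurable M \<and> (\<forall>\<omega>\<in>space M. 0 \<le> \<xi> \<omega>) \<and>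
           (AE \<omega> in M. \<forall>t>0. \<bar>Y t \<omega>\<bar> \<le> max (t powr (h2 + \<delta>)) 1 * \<xi> \<omega>) \<and>
           (\<exists>C1>0. \<exists>C2>0. \<forall>u>0.
              measure M {\<omega>\<in>space M. \<xi> \<omega> > u} \<le> C1 * exp (- C2 * u\<^sup>2))"
proof (intro allI impI)
  fix \<delta> :: real
  assume \<delta>: "\<delta> > 0"
  interpret S: mbm_setup H M Y h1 h2 D \<kappa> \<delta>
  proof
    show "\<And>t. 0 \<le> t \<Longrightarrow> h1 \<le> H t \<and> H t \<le> h2" using H1(4) by auto
    show "\<And>s t. 0 < s \<Longrightarrow> s \<le> t \<Longrightarrow> \<bar>H t - H s\<bar> \<le> D * (t - s) powr \<kappa>" using H2(4) by auto
  qed (use H1 H2 Y \<delta> in auto)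
  show "\<exists>\<xi>. \<xi> \<in> borel_measurable M \<and> (\<forall>\<omega>\<in>space M. 0 \<le> \<xi> \<omega>) \<and>
           (AE \<omega> in M. \<forall>t>0. \<bar>Y t \<omega>\<bar> \<le> max (t powr (h2 + \<delta>)) 1 * \<xi> \<omega>) \<and>
           (\<exists>C1>0. \<exists>C2>0. \<forall>u>0.
              measure M {\<omega>\<in>space M. \<xi> \<omega> > u} \<le> C1 * exp (- C2 * u\<^sup>2))"
    by (rule S.main_result)
qed

end
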